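(* Fix $q\in[0,1)$. There is a constant $C>0$ depending only on $q$ such that the following holds. Let $N\in\mathbb N$, $k\in\llbracket0,N\rrbracket$, $a\in\mathbb N$, $b\in\mathbb R$, $t\ge0$, and let $X$ be an integer sufficiently large depending on $N,k,a,b$. Let $\dot\zeta_0$ be the random bijection of $\llbracket -X,X\rrbracket$ that is the identity on $\llbracket k+1,X\rrbracket$ and whose restriction to $\llbracket -X,k\rrbracket$ has the Mallows law $\mathcal M_{-X,k}$, and let $(\dot\zeta_t)_{t\ge0}$ be the multi-species ASEP on $\llbracket -X,X\rrbracket$ started from $\dot\zeta_0$. Write $\dot\zeta^i_t(x)=\mathbb 1[\dot\zeta_t(x)\le i]$. Let $\dot{\mathcal E}$ be the event that $h'\{\dot\zeta^k_t\}(N-k)>N-k+b$ and $h\{\dot\zeta^{-X+k-1}_t\}(N-k+a)<N-k+a$. Then $\mathbb P[\dot{\mathcal E}]\le Cq^{b/4-a/2}$.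
   Context: $\llbracket x,y\rrbracket$ is the set of integers in $[x,y]$. For integers $m\le n$, $\mathcal M_{m,n}$ is the Mallows measure on bijections $w$ of $\llbracket m,n\rrbracket$: $\mathcal M_{m,n}(w)\propto q^{\#\{m\le i<j\le n:\,w(i)<w(j)\}}$. The multi-species ASEP on $\llbracket -X,X\rrbracket$: state a bijection $\sigma$ of $\llbracket -X,X\rrbracket$; each nearest-neighbour pair $x,x+1$ in the interval independently swaps its values at rate $1$ if $\sigma(x)<\sigma(x+1)$ and at rate $q$ otherwise. Height functions: for $\omega:\llbracket m,n\rrbracket\to\{0,1\}$, $h\{\omega\}:\mathbb Z\to\mathbb Z$ is defined by extending $\omega$ by $0$ on $x<m$ and $1$ on $x>n$, setting $h\{\omega\}(x)=x$ for $x<m$ and $h\{\omega\}(x)-h\{\omega\}(x-1)=1-2\omega(x)$; $h'\{\omega\}$ is defined the same way but extending $\omega$ by $1$ on all of $\mathbb Z\setminus\llbracket m,n\rrbracket$ (so $h'\{\omega\}(x)=-x$ for $x<m$). *)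

theory Defs
  imports Complex_Main
begin

definition perms_on :: "int \<Rightarrow> int \<Rightarrow> (int \<Rightarrow> int) set" where
  "perms_on m n = {\<sigma>. bij_betw \<sigma> {m..n} {m..n} \<and> (\<forall>x. x \<notin> {m..n} \<longrightarrow> \<sigma> x = x)}"

definition mallows_weight :: "real \<Rightarrow> int \<Rightarrow> int \<Rightarrow> (int \<Rightarrow> int) \<Rightarrow> real" where
  "mallows_weight q m n \<sigma> = q ^ card {(i, j). m \<le> i \<and> i < j \<and> j \<le> n \<and> \<sigma> i < \<sigma> j}"

definition mallows :: "real \<Rightarrow> int \<Rightarrow> int \<Rightarrow> (int \<Rightarrow> int) \<Rightarrow> real" where
  "mallows q m n \<sigma> =
     (if \<sigma> \<in> perms_on m n
      then mallows_weight q m n \<sigma> / (\<Sum>\<tau>\<in>perms_on m n. mallows_weight q m n \<tau>)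
      else 0)"

definition swap_at :: "(int \<Rightarrow> int) \<Rightarrow> int \<Rightarrow> int \<Rightarrow> int" where
  "swap_at \<sigma> x = (\<lambda>y. if y = x then \<sigma> (x + 1) else if y = x + 1 then \<sigma> x else \<sigma> y)"

definition asep_rate :: "real \<Rightarrow> int \<Rightarrow> (int \<Rightarrow> int) \<Rightarrow> (int \<Rightarrow> int) \<Rightarrow> real" where
  "asep_rate q X \<sigma> \<tau> =
     (\<Sum>x\<in>{-X..<X}. if \<tau> = swap_at \<sigma> x then (if \<sigma> x < \<sigma> (x + 1) then 1 else q) else 0)"

definition asep_gen :: "real \<Rightarrow> int \<Rightarrow> (int \<Rightarrow> int) \<Rightarrow> (int \<Rightarrow> int) \<Rightarrow> real" where
  "asep_gen q X \<sigma> \<tau> =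
     asep_rate q X \<sigma> \<tau> - (if \<sigma> = \<tau> then (\<Sum>\<rho>\<in>perms_on (-X) X. asep_rate q X \<sigma> \<rho>) else 0)"

fun asep_gen_pow :: "real \<Rightarrow> int \<Rightarrow> nat \<Rightarrow> (int \<Rightarrow> int) \<Rightarrow> (int \<Rightarrow> int) \<Rightarrow> real" where
  "asep_gen_pow q X 0 \<sigma> \<tau> = (if \<sigma> = \<tau> then 1 else 0)"
| "asep_gen_pow q X (Suc n) \<sigma> \<tau> =
     (\<Sum>\<rho>\<in>perms_on (-X) X. asep_gen_pow q X n \<sigma> \<rho> * asep_gen q X \<rho> \<tau>)"

definition asep_trans :: "real \<Rightarrow> int \<Rightarrow> real \<Rightarrow> (int \<Rightarrow> int) \<Rightarrow> (int \<Rightarrow> int) \<Rightarrow> real" where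
  "asep_trans q X t \<sigma> \<tau> = (\<Sum>n. t ^ n / fact n * asep_gen_pow q X n \<sigma> \<tau>)"

text \<open>Probability that the ASEP at time t, started from the state that is the identity on
  [k+1,X] and Mallows M_{-X,k} on [-X,k], lies in the event E.\<close>
definition asep_prob_dot :: "real \<Rightarrow> int \<Rightarrow> int \<Rightarrow> real \<Rightarrow> ((int \<Rightarrow> int) \<Rightarrow> bool) \<Rightarrow> real" where
  "asep_prob_dot q X k t E =
     (\<Sum>\<sigma>\<in>perms_on (-X) X. \<Sum>\<tau>\<in>{\<tau>\<in>perms_on (-X) X. E \<tau>}.
        mallows q (-X) k \<sigma> * asep_trans q X t \<sigma> \<tau>)"

definition cut :: "int \<Rightarrow> (int \<Rightarrow> int) \<Rightarrow> int \<Rightarrow> int" where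
  "cut i \<zeta> = (\<lambda>x. if \<zeta> x \<le> i then 1 else 0)"

definition height :: "int \<Rightarrow> int \<Rightarrow> (int \<Rightarrow> int) \<Rightarrow> int \<Rightarrow> int" where
  "height m n \<omega> x =
     (if x < m then x
      else (m - 1) + (\<Sum>y\<in>{m..x}. 1 - 2 * (if y > n then 1 else \<omega> y)))"

definition height' :: "int \<Rightarrow> int \<Rightarrow> (int \<Rightarrow> int) \<Rightarrow> int \<Rightarrow> int" where
  "height' m n \<omega> x =
     (if x < m then - x
      else - (m - 1) + (\<Sum>y\<in>{m..x}. 1 - 2 * (if y > n then 1 else \<omega> y)))"

end

theory Submission
  imports Defs
begin


lemma perms_on_bij: "\<sigma> \<in> perms_on m n \<Longrightarrow> bij_betw \<sigma> {m..n} {m..n}"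
  by (simp add: perms_on_def)

lemma perms_on_out: "\<sigma> \<in> perms_on m n \<Longrightarrow> x \<notin> {m..n} \<Longrightarrow> \<sigma> x = x"
  by (simp add: perms_on_def)

lemma perms_on_in: "\<sigma> \<in> perms_on m n \<Longrightarrow> x \<in> {m..n} \<Longrightarrow> \<sigma> x \<in> {m..n}"
  using perms_on_bij bij_betwE by blast

lemma perms_on_inj: assumes "\<sigma> \<in> perms_on m n" shows "inj \<sigma>"
proof (rule injI)
  fix x y assume e: "\<sigma> x = \<sigma> y"
  have b: "inj_on \<sigma> {m..n}" using perms_on_bij[OF assms] by (rule bij_betw_imp_inj_on)
  have ix: "\<sigma> x \<in> {m..n} \<longleftrightarrow> x \<in> {m..n}"
    using perms_on_in[OF assms, of x] perms_on_out[OF assms, of x] by metis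
  have iy: "\<sigma> y \<in> {m..n} \<longleftrightarrow> y \<in> {m..n}"
    using perms_on_in[OF assms, of y] perms_on_out[OF assms, of y] by metis
  show "x = y"
  proof (cases "x \<in> {m..n}")
    case True
    hence "y \<in> {m..n}" using ix iy e by metis
    thus ?thesis using inj_onD[OF b e True] by simp
  next
    case False
    hence "y \<notin> {m..n}" using ix iy e by metis
    thus ?thesis using perms_on_out[OF assms, of x] perms_on_out[OF assms, of y] e False by simp
  qed
qed

lemma finite_perms_on: "finite (perms_on m n)"
proof -
  let ?g = "\<lambda>\<sigma>::int\<Rightarrow>int. (\<lambda>x. if x \<in> {m..n} then \<sigma> x else 0)"
  have "?g ` perms_on m n \<subseteq> {f. \<forall>x. (x \<in> {m..n} \<longrightarrow> f x \<in> {m..n}) \<and> (x \<notin> {m..n} \<longrightarrow> f x = 0)}"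
    using perms_on_in by auto
  moreover have "finite {f::int\<Rightarrow>int. \<forall>x. (x \<in> {m..n} \<longrightarrow> f x \<in> {m..n}) \<and> (x \<notin> {m..n} \<longrightarrow> f x = 0)}"
    by (rule finite_set_of_finite_funs) auto
  ultimately have "finite (?g ` perms_on m n)" using finite_subset by blast
  moreover have "inj_on ?g (perms_on m n)"
  proof (rule inj_onI)
    fix \<sigma> \<tau> assume a: "\<sigma> \<in> perms_on m n" "\<tau> \<in> perms_on m n" "?g \<sigma> = ?g \<tau>"
    show "\<sigma> = \<tau>"
    proof
      fix x show "\<sigma> x = \<tau> x"
      proof (cases "x \<in> {m..n}")
        case True thus ?thesis using fun_cong[OF a(3), of x] by simp
      next
        case False thus ?thesis using perms_on_out[OF a(1) False] perms_on_out[OF a(2) False] by simp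
      qed
    qed
  qed
  ultimately show ?thesis using finite_imageD by blast
qed

lemma swap_at_swap_at[simp]: "swap_at (swap_at \<sigma> x) x = \<sigma>"
  by (rule ext) (simp add: swap_at_def)

lemma swap_at_eq_iff: "(\<tau> = swap_at \<sigma> x) = (\<sigma> = swap_at \<tau> x)"
  by (metis swap_at_swap_at)

definition tr :: "int \<Rightarrow> int \<Rightarrow> int \<Rightarrow> int" where
  "tr p s = (\<lambda>y. if y = p then s else if y = s then p else y)"

lemma tr_tr[simp]: "tr p s (tr p s y) = y"
  by (simp add: tr_def)

lemma swap_at_tr: "swap_at \<sigma> x = \<sigma> \<circ> tr x (x+1)"
  by (rule ext) (simp add: swap_at_def tr_def)

lemma perms_on_comp_tr:
  assumes "\<sigma> \<in> perms_on m n" "p \<in> {m..n}" "s \<in> {m..n}"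
  shows "\<sigma> \<circ> tr p s \<in> perms_on m n"
proof -
  have "bij_betw (tr p s) {m..n} {m..n}"
  proof (rule bij_betw_byWitness[where f'="tr p s"])
    show "\<forall>a\<in>{m..n}. tr p s (tr p s a) = a" by simp
    show "\<forall>a\<in>{m..n}. tr p s (tr p s a) = a" by simp
    show "tr p s ` {m..n} \<subseteq> {m..n}" using assms(2,3) by (auto simp: tr_def)
    show "tr p s ` {m..n} \<subseteq> {m..n}" using assms(2,3) by (auto simp: tr_def)
  qed
  hence "bij_betw (\<sigma> \<circ> tr p s) {m..n} {m..n}"
    using bij_betw_trans perms_on_bij[OF assms(1)] by blast
  moreover have "\<forall>x. x \<notin> {m..n} \<longrightarrow> (\<sigma> \<circ> tr p s) x = x"
    using assms perms_on_out[OF assms(1)] by (simp add: tr_def)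
  ultimately show ?thesis unfolding perms_on_def by blast
qed

lemma swap_at_perms_on:
  assumes "\<sigma> \<in> perms_on m n" "m \<le> x" "x < n"
  shows "swap_at \<sigma> x \<in> perms_on m n"
  unfolding swap_at_tr using perms_on_comp_tr[OF assms(1), of x "x+1"] assms by simp

locale ac =
  fixes q :: real and X :: int
  assumes q0: "0 \<le> q" and q1: "q \<le> 1" and X0: "0 \<le> X"
begin

abbreviation "S \<equiv> perms_on (-X) X"

lemma rate_nonneg: "asep_rate q X \<sigma> \<tau> \<ge> 0"
  unfolding asep_rate_def using q0 by (intro sum_nonneg) auto

lemma out_eq: "(\<Sum>\<rho>\<in>S. asep_rate q X \<sigma> \<rho>) =
   (\<Sum>x\<in>{-X..<X}. if swap_at \<sigma> x \<in> S then (if \<sigma> x < \<sigma> (x + 1) then 1 else q) else 0)"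
  unfolding asep_rate_def
  apply (subst sum.swap)
  apply (rule sum.cong[OF refl])
  using finite_perms_on by (simp add: sum.delta)

lemma out_le: "(\<Sum>\<rho>\<in>S. asep_rate q X \<sigma> \<rho>) \<le> 2 * X"
proof -
  have "(\<Sum>\<rho>\<in>S. asep_rate q X \<sigma> \<rho>) \<le> (\<Sum>x\<in>{-X..<X}. (1::real))"
    unfolding out_eq using q1 by (intro sum_mono) auto
  also have "\<dots> = 2 * X" using X0 by simp
  finally show ?thesis .
qed

lemma rate_le: "asep_rate q X \<sigma> \<tau> \<le> 2 * X"
proof -
  have "asep_rate q X \<sigma> \<tau> \<le> (\<Sum>x\<in>{-X..<X}. (1::real))"
    unfolding asep_rate_def using q1 by (intro sum_mono) auto
  also have "\<dots> = 2 * X" using X0 by simp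
  finally show ?thesis .
qed

definition K :: real where "K = 4 * X + 1"

lemma gen_bound: "\<bar>asep_gen q X \<sigma> \<tau>\<bar> \<le> K"
proof -
  have a: "0 \<le> (\<Sum>\<rho>\<in>S. asep_rate q X \<sigma> \<rho>)" by (intro sum_nonneg rate_nonneg)
  show ?thesis unfolding asep_gen_def K_def
    using rate_nonneg[of \<sigma> \<tau>] rate_le[of \<sigma> \<tau>] out_le[of \<sigma>] a by auto
qed

definition M :: real where "M = real (card S) * K"

lemma K_ge1: "K \<ge> 1" using X0 by (simp add: K_def)

lemma M_nonneg: "M \<ge> 0" using K_ge1 by (simp add: M_def)

lemma pow_bound: "\<bar>asep_gen_pow q X n \<sigma> \<tau>\<bar> \<le> M ^ n"
proof (induction n arbitrary: \<tau>)
  case 0 thus ?case by simp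
next
  case (Suc n)
  have "\<bar>asep_gen_pow q X (Suc n) \<sigma> \<tau>\<bar> \<le> (\<Sum>\<rho>\<in>S. \<bar>asep_gen_pow q X n \<sigma> \<rho> * asep_gen q X \<rho> \<tau>\<bar>)"
    by (simp add: sum_abs)
  also have "\<dots> \<le> (\<Sum>\<rho>\<in>S. M ^ n * K)"
    apply (intro sum_mono)
    apply (simp only: abs_mult)
    apply (intro mult_mono Suc gen_bound)
    using M_nonneg by auto
  also have "\<dots> = M ^ Suc n" by (simp add: M_def)
  finally show ?case .
qed

lemma summable_expo: "summable (\<lambda>n. (y::real) ^ n / fact n)"
proof -
  have "summable (\<lambda>n. y ^ n /\<^sub>R fact n)" using exp_converges sums_summable by blast
  moreover have "(\<lambda>n. y ^ n /\<^sub>R fact n) = (\<lambda>n. y ^ n / fact n)"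
    by (rule ext) (simp add: divide_inverse_commute)
  ultimately show ?thesis by simp
qed

lemma summable_pow:
  "summable (\<lambda>n. norm (t ^ n / fact n * asep_gen_pow q X n \<sigma> \<tau>))"
proof (rule summable_comparison_test[OF _ summable_expo[of "\<bar>t\<bar> * M"]])
  show "\<exists>N. \<forall>n\<ge>N. norm (norm (t ^ n / fact n * asep_gen_pow q X n \<sigma> \<tau>)) \<le> (\<bar>t\<bar> * M) ^ n / fact n"
  proof (intro exI allI impI)
    fix n :: nat
    have "norm (norm (t ^ n / fact n * asep_gen_pow q X n \<sigma> \<tau>)) = \<bar>t\<bar> ^ n / fact n * \<bar>asep_gen_pow q X n \<sigma> \<tau>\<bar>"
      by (simp add: abs_mult power_abs)
    also have "\<dots> \<le> \<bar>t\<bar> ^ n / fact n * M ^ n"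
      by (intro mult_left_mono pow_bound) auto
    also have "\<dots> = (\<bar>t\<bar> * M) ^ n / fact n" by (simp add: power_mult_distrib)
    finally show "norm (norm (t ^ n / fact n * asep_gen_pow q X n \<sigma> \<tau>)) \<le> (\<bar>t\<bar> * M) ^ n / fact n" .
  qed
qed

lemma summable_pow': "summable (\<lambda>n. t ^ n / fact n * asep_gen_pow q X n \<sigma> \<tau>)"
  by (rule summable_norm_cancel[OF summable_pow])

lemma gen_rowsum: "\<rho> \<in> S \<Longrightarrow> (\<Sum>\<tau>\<in>S. asep_gen q X \<rho> \<tau>) = 0"
  unfolding asep_gen_def using finite_perms_on
  by (simp add: sum_subtractf sum.delta)

lemma pow_rowsum: assumes s: "\<sigma> \<in> S"
  shows "(\<Sum>\<tau>\<in>S. asep_gen_pow q X n \<sigma> \<tau>) = (if n = 0 then 1 else 0)"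
proof (cases n)
  case 0 thus ?thesis using finite_perms_on s by (simp add: sum.delta)
next
  case (Suc m)
  have "(\<Sum>\<tau>\<in>S. asep_gen_pow q X (Suc m) \<sigma> \<tau>) =
        (\<Sum>\<rho>\<in>S. asep_gen_pow q X m \<sigma> \<rho> * (\<Sum>\<tau>\<in>S. asep_gen q X \<rho> \<tau>))"
    by (simp only: asep_gen_pow.simps sum_distrib_left) (rule sum.swap)
  also have "\<dots> = 0" by (simp add: gen_rowsum)
  finally show ?thesis using Suc by simp
qed

lemma sum_if0: "(\<Sum>n. if n = (0::nat) then (1::real) else 0) = 1"
proof -
  have "(\<lambda>n::nat. if n = 0 then (1::real) else 0) sums (\<Sum>n\<in>{0}. if n = 0 then 1 else 0)"
    using sums_single[of 0 "\<lambda>_. (1::real)"] by simp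
  hence "(\<lambda>n::nat. if n = 0 then (1::real) else 0) sums 1" by simp
  thus ?thesis by (rule sums_unique[symmetric])
qed

lemma trans_rowsum: assumes s: "\<sigma> \<in> S" shows "(\<Sum>\<tau>\<in>S. asep_trans q X t \<sigma> \<tau>) = 1"
proof -
  have "(\<Sum>\<tau>\<in>S. asep_trans q X t \<sigma> \<tau>) = (\<Sum>n. \<Sum>\<tau>\<in>S. t ^ n / fact n * asep_gen_pow q X n \<sigma> \<tau>)"
    unfolding asep_trans_def by (rule suminf_sum[symmetric]) (rule summable_pow')
  also have "\<dots> = (\<Sum>n. t ^ n / fact n * (if n = 0 then 1 else 0))"
    by (simp only: sum_distrib_left[symmetric] pow_rowsum[OF s])
  also have "\<dots> = (\<Sum>n. if n = 0 then 1 else 0)"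
    by (rule arg_cong[where f=suminf]) auto
  also have "\<dots> = 1" by (rule sum_if0)
  finally show ?thesis .
qed

end


lemma comb_step:
  fixes g :: "nat \<Rightarrow> real"
  shows "(\<Sum>i\<le>n. real (n choose i) * c ^ i * g (Suc n - i)) +
         (\<Sum>i\<le>n. real (n choose i) * c ^ Suc i * g (n - i)) =
         (\<Sum>i\<le>Suc n. real (Suc n choose i) * c ^ i * g (Suc n - i))"
proof -
  have r: "(\<Sum>i\<le>Suc n. real (Suc n choose i) * c ^ i * g (Suc n - i)) =
      g (Suc n) + (\<Sum>i\<le>n. real (n choose i) * c ^ Suc i * g (n - i))
        + (\<Sum>i\<le>n. real (n choose Suc i) * c ^ Suc i * g (n - i))"
    by (subst sum.atMost_Suc_shift) (simp add: ring_distribs sum.distrib)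
  have l: "(\<Sum>i\<le>n. real (n choose i) * c ^ i * g (Suc n - i)) =
      (\<Sum>i\<le>Suc n. real (n choose i) * c ^ i * g (Suc n - i))"
    by simp
  also have "\<dots> = g (Suc n) + (\<Sum>i\<le>n. real (n choose Suc i) * c ^ Suc i * g (n - i))"
    by (subst sum.atMost_Suc_shift) simp
  finally show ?thesis using r by simp
qed

fun bpow :: "real \<Rightarrow> int \<Rightarrow> nat \<Rightarrow> (int \<Rightarrow> int) \<Rightarrow> (int \<Rightarrow> int) \<Rightarrow> real" where
  "bpow q X 0 \<sigma> \<tau> = (if \<sigma> = \<tau> then 1 else 0)"
| "bpow q X (Suc n) \<sigma> \<tau> =
     (\<Sum>\<rho>\<in>perms_on (-X) X. bpow q X n \<sigma> \<rho> * (asep_gen q X \<rho> \<tau> + (if \<rho> = \<tau> then 2 * X else 0)))"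

context ac
begin

lemma bgen_nonneg: "asep_gen q X \<rho> \<tau> + (if \<rho> = \<tau> then 2 * X else 0) \<ge> 0"
proof (cases "\<rho> = \<tau>")
  case True
  thus ?thesis using rate_nonneg[of \<rho> \<tau>] out_le[of \<rho>] by (simp add: asep_gen_def)
next
  case False
  thus ?thesis using rate_nonneg[of \<rho> \<tau>] by (simp add: asep_gen_def)
qed

lemma bpow_nonneg: "bpow q X n \<sigma> \<tau> \<ge> 0"
proof (induction n arbitrary: \<tau>)
  case 0 thus ?case by simp
next
  case (Suc n) thus ?case
    by (simp only: bpow.simps) (intro sum_nonneg mult_nonneg_nonneg Suc bgen_nonneg)
qed

lemma bpow_binom:
  assumes "\<tau> \<in> S"
  shows "bpow q X n \<sigma> \<tau> = (\<Sum>i\<le>n. real (n choose i) * (2 * X) ^ i * asep_gen_pow q X (n - i) \<sigma> \<tau>)"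
  using assms
proof (induction n arbitrary: \<tau>)
  case 0 thus ?case by simp
next
  case (Suc n)
  let ?c = "real_of_int (2 * X)"
  let ?g = "\<lambda>j. asep_gen_pow q X j \<sigma> \<tau>"
  have "bpow q X (Suc n) \<sigma> \<tau> = (\<Sum>\<rho>\<in>S. bpow q X n \<sigma> \<rho> * asep_gen q X \<rho> \<tau>)
          + (\<Sum>\<rho>\<in>S. if \<rho> = \<tau> then bpow q X n \<sigma> \<rho> * ?c else 0)"
    unfolding bpow.simps sum.distrib[symmetric]
    by (rule sum.cong[OF refl]) (simp add: ring_distribs)
  also have "(\<Sum>\<rho>\<in>S. if \<rho> = \<tau> then bpow q X n \<sigma> \<rho> * ?c else 0) = bpow q X n \<sigma> \<tau> * ?c"
    using Suc.prems finite_perms_on by (simp add: sum.delta')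
  also have "(\<Sum>\<rho>\<in>S. bpow q X n \<sigma> \<rho> * asep_gen q X \<rho> \<tau>) =
      (\<Sum>\<rho>\<in>S. (\<Sum>i\<le>n. real (n choose i) * ?c ^ i * asep_gen_pow q X (n - i) \<sigma> \<rho>) * asep_gen q X \<rho> \<tau>)"
    by (rule sum.cong[OF refl]) (simp add: Suc.IH)
  also have "\<dots> = (\<Sum>i\<le>n. real (n choose i) * ?c ^ i * (\<Sum>\<rho>\<in>S. asep_gen_pow q X (n - i) \<sigma> \<rho> * asep_gen q X \<rho> \<tau>))"
    by (simp only: sum_distrib_right sum_distrib_left mult.assoc) (rule sum.swap)
  also have "\<dots> = (\<Sum>i\<le>n. real (n choose i) * ?c ^ i * ?g (Suc n - i))"
    by (rule sum.cong[OF refl]) (simp add: Suc_diff_le)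
  also have "bpow q X n \<sigma> \<tau> * ?c = (\<Sum>i\<le>n. real (n choose i) * ?c ^ Suc i * ?g (n - i))"
    unfolding Suc.IH[OF Suc.prems] sum_distrib_right
    by (rule sum.cong[OF refl]) (simp add: mult_ac)
  finally show ?case using comb_step[of n ?c ?g] by simp
qed

lemma trans_exp:
  assumes "\<tau> \<in> S"
  fixes t :: real
  shows "(\<lambda>n. t ^ n / fact n * bpow q X n \<sigma> \<tau>) sums (exp (2 * X * t) * asep_trans q X t \<sigma> \<tau>)"
proof -
  let ?c = "real_of_int (2 * X)"
  define a where "a = (\<lambda>i. (?c * t) ^ i / fact i)"
  define b where "b = (\<lambda>j. t ^ j / fact j * asep_gen_pow q X j \<sigma> \<tau>)"
  have sa: "summable (\<lambda>k. norm (a k))"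
  proof -
    have "(\<lambda>k. norm (a k)) = (\<lambda>k. \<bar>?c * t\<bar> ^ k / fact k)"
      by (rule ext) (simp add: a_def power_abs)
    thus ?thesis using summable_expo by simp
  qed
  have sb: "summable (\<lambda>k. norm (b k))" unfolding b_def by (rule summable_pow)
  have ea: "suminf a = exp (?c * t)"
  proof -
    have "(\<lambda>n. (?c * t) ^ n /\<^sub>R fact n) = a"
      by (rule ext) (simp add: a_def divide_inverse_commute)
    thus ?thesis using exp_converges[of "?c * t"] sums_unique by fastforce
  qed
  have eb: "suminf b = asep_trans q X t \<sigma> \<tau>" by (simp add: b_def asep_trans_def)
  have cp: "(\<lambda>k. \<Sum>i\<le>k. a i * b (k - i)) sums (suminf a * suminf b)"
    by (rule Cauchy_product_sums[OF sa sb])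
  have "(\<lambda>k. \<Sum>i\<le>k. a i * b (k - i)) = (\<lambda>n. t ^ n / fact n * bpow q X n \<sigma> \<tau>)"
  proof (rule ext)
    fix n
    have "(\<Sum>i\<le>n. a i * b (n - i)) =
       (\<Sum>i\<le>n. t ^ n / fact n * (real (n choose i) * ?c ^ i * asep_gen_pow q X (n - i) \<sigma> \<tau>))"
    proof (rule sum.cong[OF refl])
      fix i assume "i \<in> {..n}"
      hence i: "i \<le> n" by simp
      have p: "t ^ i * t ^ (n - i) = t ^ n" using i by (simp add: power_add[symmetric])
      have f: "real (n choose i) = fact n / (fact i * fact (n - i))" using binomial_fact[OF i] by simp
      have "a i * b (n - i) = (t ^ i * t ^ (n - i)) / (fact i * fact (n - i)) * ?c ^ i * asep_gen_pow q X (n - i) \<sigma> \<tau>"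
        by (simp add: a_def b_def power_mult_distrib)
      also have "\<dots> = t ^ n / fact n * (real (n choose i) * ?c ^ i * asep_gen_pow q X (n - i) \<sigma> \<tau>)"
        unfolding p f by (simp add: field_simps)
      finally show "a i * b (n - i) = t ^ n / fact n * (real (n choose i) * ?c ^ i * asep_gen_pow q X (n - i) \<sigma> \<tau>)" .
    qed
    also have "\<dots> = t ^ n / fact n * bpow q X n \<sigma> \<tau>"
      by (simp add: bpow_binom[OF assms] sum_distrib_left)
    finally show "(\<Sum>i\<le>n. a i * b (n - i)) = t ^ n / fact n * bpow q X n \<sigma> \<tau>" .
  qed
  thus ?thesis using cp ea eb by simp
qed

lemma trans_nonneg:
  fixes t :: real
  assumes "\<tau> \<in> S" "t \<ge> 0"
  shows "asep_trans q X t \<sigma> \<tau> \<ge> 0"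
proof -
  have "0 \<le> exp (2 * X * t) * asep_trans q X t \<sigma> \<tau>"
  proof (rule sums_le[OF _ sums_zero trans_exp[OF assms(1)]])
    fix n show "0 \<le> t ^ n / fact n * bpow q X n \<sigma> \<tau>"
      using assms(2) bpow_nonneg by simp
  qed
  thus ?thesis by (simp add: zero_le_mult_iff)
qed

end


definition Rm :: "int \<Rightarrow> int \<Rightarrow> (int \<Rightarrow> int) \<Rightarrow> int \<Rightarrow> int" where
  "Rm X k \<tau> = (\<lambda>x. if \<tau> x \<le> k then - X - 1 else \<tau> x)"

definition NI :: "int \<Rightarrow> int \<Rightarrow> (int \<Rightarrow> int) \<Rightarrow> (int \<times> int) set" where
  "NI X k \<tau> = {(i, j). - X \<le> i \<and> i < j \<and> j \<le> X \<and> \<tau> i < \<tau> j \<and> \<tau> j \<le> k}"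

definition wt :: "real \<Rightarrow> int \<Rightarrow> int \<Rightarrow> (int \<Rightarrow> int) \<Rightarrow> real" where
  "wt q X k \<tau> = q ^ card (NI X k \<tau>)"

definition rr :: "real \<Rightarrow> (int \<Rightarrow> int) \<Rightarrow> int \<Rightarrow> real" where
  "rr q \<rho> x = (if \<rho> x < \<rho> (x + 1) then 1 else q)"

definition Phi :: "real \<Rightarrow> int \<Rightarrow> ((int \<Rightarrow> int) \<Rightarrow> real) \<Rightarrow> (int \<Rightarrow> int) \<Rightarrow> real" where
  "Phi q X f \<rho> = (\<Sum>x\<in>{-X..<X}. if \<rho> x = - X - 1 \<and> \<rho> (x + 1) = - X - 1 then 0
      else f (swap_at \<rho> x) * rr q (swap_at \<rho> x) x - f \<rho> * rr q \<rho> x)"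

definition phi :: "int \<Rightarrow> int \<Rightarrow> int \<times> int \<Rightarrow> int \<times> int" where
  "phi p s = (\<lambda>(i, j). if (i = p \<and> p < j \<and> j < s) \<or> (j = s \<and> p < i \<and> i < s) then (i, j)
      else (tr p s i, tr p s j))"

lemma finite_NI: "finite (NI X k \<tau>)"
proof -
  have "NI X k \<tau> \<subseteq> {-X..X} \<times> {-X..X}" by (auto simp: NI_def)
  thus ?thesis by (rule finite_subset) auto
qed

lemma phi_phi: "i < j \<Longrightarrow> p < s \<Longrightarrow> phi p s (phi p s (i, j)) = (i, j)"
  by (auto simp: phi_def tr_def)

lemma NI_tr_into:
  assumes ps: "p < s" "- X \<le> p" "s \<le> X"
    and btw: "\<And>z. p < z \<Longrightarrow> z < s \<Longrightarrow>
       (\<tau> z < \<tau> p \<and> \<tau> z < \<tau> s \<and> \<tau> p \<le> k \<and> \<tau> s \<le> k) \<or> (\<tau> p < \<tau> z \<and> \<tau> s < \<tau> z)"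
    and ij: "(i, j) \<in> NI X k (\<tau> \<circ> tr p s)" "(i, j) \<noteq> (p, s)"
  shows "phi p s (i, j) \<in> NI X k \<tau> - {(p, s)}"
proof -
  have r: "- X \<le> i" "i < j" "j \<le> X" "\<tau> (tr p s i) < \<tau> (tr p s j)" "\<tau> (tr p s j) \<le> k"
    using ij(1) by (auto simp: NI_def)
  show ?thesis
  proof (cases "i = p \<and> p < j \<and> j < s")
    case True
    hence e: "phi p s (i, j) = (i, j)" by (simp add: phi_def)
    have "tr p s i = s" "tr p s j = j" using True by (auto simp: tr_def)
    hence "\<tau> s < \<tau> j" "\<tau> j \<le> k" using r by auto
    hence "\<tau> p < \<tau> j" using btw[of j] True by auto
    thus ?thesis using e r ij(2) True \<open>\<tau> j \<le> k\<close> by (auto simp: NI_def)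
  next
    case F1: False
    show ?thesis
    proof (cases "j = s \<and> p < i \<and> i < s")
      case True
      hence e: "phi p s (i, j) = (i, j)" using F1 by (simp add: phi_def)
      have "tr p s i = i" "tr p s j = p" using True by (auto simp: tr_def)
      hence "\<tau> i < \<tau> p" "\<tau> p \<le> k" using r by auto
      hence "\<tau> i < \<tau> s \<and> \<tau> s \<le> k" using btw[of i] True by auto
      thus ?thesis using e r ij(2) True by (auto simp: NI_def)
    next
      case F2: False
      hence e: "phi p s (i, j) = (tr p s i, tr p s j)" using F1 unfolding phi_def by auto
      have lt: "tr p s i < tr p s j" using r(2) F1 F2 ij(2) ps(1) unfolding tr_def by auto
      have rg: "- X \<le> tr p s i" "tr p s j \<le> X" using r ps unfolding tr_def by auto
      have ne: "(tr p s i, tr p s j) \<noteq> (p, s)" using r(2) ps(1) unfolding tr_def by auto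
      show ?thesis unfolding e using lt rg ne r(4,5) by (auto simp: NI_def)
    qed
  qed
qed

lemma tr_comp_tr: "\<tau> \<circ> tr p s \<circ> tr p s = \<tau>"
  by (rule ext) simp

lemma NI_tr_into2:
  assumes ps: "p < s" "- X \<le> p" "s \<le> X"
    and btw: "\<And>z. p < z \<Longrightarrow> z < s \<Longrightarrow>
       (\<tau> z < \<tau> p \<and> \<tau> z < \<tau> s \<and> \<tau> p \<le> k \<and> \<tau> s \<le> k) \<or> (\<tau> p < \<tau> z \<and> \<tau> s < \<tau> z)"
    and ij: "(i, j) \<in> NI X k \<tau>" "(i, j) \<noteq> (p, s)"
  shows "phi p s (i, j) \<in> NI X k (\<tau> \<circ> tr p s) - {(p, s)}"
proof -
  define \<sigma> where "\<sigma> = \<tau> \<circ> tr p s"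
  have t: "\<tau> = \<sigma> \<circ> tr p s" unfolding \<sigma>_def by (simp add: tr_comp_tr)
  have a: "tr p s z = z" if "p < z" "z < s" for z using that by (auto simp: tr_def)
  have b: "tr p s p = s" "tr p s s = p" by (auto simp: tr_def)
  have btw': "(\<sigma> z < \<sigma> p \<and> \<sigma> z < \<sigma> s \<and> \<sigma> p \<le> k \<and> \<sigma> s \<le> k) \<or> (\<sigma> p < \<sigma> z \<and> \<sigma> s < \<sigma> z)"
    if "p < z" "z < s" for z
    using btw[OF that] a[OF that] b unfolding \<sigma>_def by auto
  have "(i, j) \<in> NI X k (\<sigma> \<circ> tr p s)" using ij(1) t by simp
  from NI_tr_into[OF ps btw' this ij(2)] show ?thesis unfolding \<sigma>_def .
qed

lemma NI_tr_card:
  assumes ps: "p < s" "- X \<le> p" "s \<le> X"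
    and btw: "\<And>z. p < z \<Longrightarrow> z < s \<Longrightarrow>
       (\<tau> z < \<tau> p \<and> \<tau> z < \<tau> s \<and> \<tau> p \<le> k \<and> \<tau> s \<le> k) \<or> (\<tau> p < \<tau> z \<and> \<tau> s < \<tau> z)"
  shows "card (NI X k (\<tau> \<circ> tr p s) - {(p, s)}) = card (NI X k \<tau> - {(p, s)})"
proof (rule bij_betw_same_card[of "phi p s"], rule bij_betw_byWitness[where f'="phi p s"])
  show "\<forall>a\<in>NI X k (\<tau> \<circ> tr p s) - {(p, s)}. phi p s (phi p s a) = a"
    using phi_phi ps(1) by (auto simp: NI_def)
  show "\<forall>a\<in>NI X k \<tau> - {(p, s)}. phi p s (phi p s a) = a"
    using phi_phi ps(1) by (auto simp: NI_def)
  show "phi p s ` (NI X k (\<tau> \<circ> tr p s) - {(p, s)}) \<subseteq> NI X k \<tau> - {(p, s)}"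
  proof
    fix b assume "b \<in> phi p s ` (NI X k (\<tau> \<circ> tr p s) - {(p, s)})"
    then obtain i j where "(i, j) \<in> NI X k (\<tau> \<circ> tr p s) - {(p, s)}" "b = phi p s (i, j)" by auto
    thus "b \<in> NI X k \<tau> - {(p, s)}" using NI_tr_into[OF ps btw, of i j] by auto
  qed
  show "phi p s ` (NI X k \<tau> - {(p, s)}) \<subseteq> NI X k (\<tau> \<circ> tr p s) - {(p, s)}"
  proof
    fix b assume "b \<in> phi p s ` (NI X k \<tau> - {(p, s)})"
    then obtain i j where ij: "(i, j) \<in> NI X k \<tau> - {(p, s)}" "b = phi p s (i, j)" by auto
    thus "b \<in> NI X k (\<tau> \<circ> tr p s) - {(p, s)}" using NI_tr_into2[OF ps btw, of i j] by auto
  qed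
qed

lemma card_NI_split:
  "card (NI X k \<tau>) = card (NI X k \<tau> - {(p, s)}) + (if (p, s) \<in> NI X k \<tau> then 1 else 0)"
proof (cases "(p, s) \<in> NI X k \<tau>")
  case True
  thus ?thesis using card_Suc_Diff1[OF finite_NI True] by simp
next
  case False thus ?thesis by simp
qed

lemma card_NI_split':
  "card (NI X k \<tau>) = card (NI X k \<tau> - {(p, s)}) + (if - X \<le> p \<and> p < s \<and> s \<le> X \<and> \<tau> p < \<tau> s \<and> \<tau> s \<le> k then 1 else 0)"
  using card_NI_split[of X k \<tau> p s] by (simp add: NI_def)

lemma Rm_swap: "Rm X k (swap_at \<tau> x) = swap_at (Rm X k \<tau>) x"
  by (rule ext) (simp add: Rm_def swap_at_def)

lemma Rm_swap_pp: "\<tau> x \<le> k \<Longrightarrow> \<tau> (x + 1) \<le> k \<Longrightarrow> Rm X k (swap_at \<tau> x) = Rm X k \<tau>"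
  by (rule ext) (simp add: Rm_def swap_at_def)

lemma Rm_part: "- X - 1 \<le> k \<Longrightarrow> (Rm X k \<tau> y = - X - 1) = (\<tau> y \<le> k)"
  by (simp add: Rm_def)

lemma rr_Rm: "- X - 1 \<le> k \<Longrightarrow> \<not> (\<tau> x \<le> k \<and> \<tau> (x + 1) \<le> k) \<Longrightarrow> rr q (Rm X k \<tau>) x = rr q \<tau> x"
  by (auto simp: rr_def Rm_def)

lemma card_swap_hole:
  assumes "- X \<le> x" "x < X" "\<not> (\<tau> x \<le> k \<and> \<tau> (x + 1) \<le> k)"
  shows "card (NI X k (swap_at \<tau> x)) = card (NI X k \<tau>)"
proof -
  have c: "card (NI X k (\<tau> \<circ> tr x (x+1)) - {(x, x+1)}) = card (NI X k \<tau> - {(x, x+1)})"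
    by (rule NI_tr_card) (use assms in auto)
  have n1: "\<not> (swap_at \<tau> x x < swap_at \<tau> x (x+1) \<and> swap_at \<tau> x (x+1) \<le> k)"
    using assms(3) by (auto simp: swap_at_def)
  have n2: "\<not> (\<tau> x < \<tau> (x+1) \<and> \<tau> (x+1) \<le> k)"
    using assms(3) by auto
  have "card (NI X k (swap_at \<tau> x)) = card (NI X k (\<tau> \<circ> tr x (x+1)) - {(x, x+1)})"
    using card_NI_split'[of X k "swap_at \<tau> x" x "x+1"] n1 by (simp add: swap_at_tr)
  also have "\<dots> = card (NI X k \<tau>)"
    using c card_NI_split'[of X k \<tau> x "x+1"] n2 by simp
  finally show ?thesis by (simp add: swap_at_tr)
qed

lemma wt_swap_pp:
  assumes "- X \<le> x" "x < X" "\<tau> x \<le> k" "\<tau> (x + 1) \<le> k" "\<tau> x \<noteq> \<tau> (x + 1)"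
  shows "wt q X k (swap_at \<tau> x) * rr q (swap_at \<tau> x) x = wt q X k \<tau> * rr q \<tau> x"
proof -
  have c: "card (NI X k (\<tau> \<circ> tr x (x+1)) - {(x, x+1)}) = card (NI X k \<tau> - {(x, x+1)})"
    by (rule NI_tr_card) (use assms in auto)
  have c1: "card (NI X k (swap_at \<tau> x)) = card (NI X k \<tau> - {(x, x+1)}) + (if \<tau> (x+1) < \<tau> x then 1 else 0)"
    using card_NI_split'[of X k "swap_at \<tau> x" x "x+1"] assms c by (simp add: swap_at_def swap_at_tr[symmetric])
  have c2: "card (NI X k \<tau>) = card (NI X k \<tau> - {(x, x+1)}) + (if \<tau> x < \<tau> (x+1) then 1 else 0)"
    using card_NI_split'[of X k \<tau> x "x+1"] assms by simp
  show ?thesis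
  proof (cases "\<tau> x < \<tau> (x+1)")
    case True
    thus ?thesis using c1 c2 by (simp add: wt_def rr_def swap_at_def)
  next
    case False
    hence "\<tau> (x+1) < \<tau> x" using assms(5) by simp
    thus ?thesis using c1 c2 by (simp add: wt_def rr_def swap_at_def)
  qed
qed


context ac
begin

lemma rr_eq: "(if \<sigma> x < \<sigma> (x + 1) then 1 else q) = rr q \<sigma> x"
  by (simp add: rr_def)

lemma out_eq2: "\<tau> \<in> S \<Longrightarrow> (\<Sum>\<rho>\<in>S. asep_rate q X \<tau> \<rho>) = (\<Sum>x\<in>{-X..<X}. rr q \<tau> x)"
  unfolding out_eq by (rule sum.cong[OF refl]) (simp add: swap_at_perms_on rr_def)

lemma vQ:
  assumes t: "\<tau> \<in> S"
  shows "(\<Sum>\<rho>\<in>S. v \<rho> * asep_gen q X \<rho> \<tau>) =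
     (\<Sum>x\<in>{-X..<X}. v (swap_at \<tau> x) * rr q (swap_at \<tau> x) x - v \<tau> * rr q \<tau> x)"
proof -
  have "(\<Sum>\<rho>\<in>S. v \<rho> * asep_gen q X \<rho> \<tau>) =
      (\<Sum>\<rho>\<in>S. v \<rho> * asep_rate q X \<rho> \<tau>) - (\<Sum>\<rho>\<in>S. if \<rho> = \<tau> then v \<rho> * (\<Sum>\<rho>'\<in>S. asep_rate q X \<rho> \<rho>') else 0)"
    unfolding sum_subtractf[symmetric] by (rule sum.cong[OF refl]) (simp add: asep_gen_def ring_distribs)
  also have "(\<Sum>\<rho>\<in>S. if \<rho> = \<tau> then v \<rho> * (\<Sum>\<rho>'\<in>S. asep_rate q X \<rho> \<rho>') else 0) =
       v \<tau> * (\<Sum>x\<in>{-X..<X}. rr q \<tau> x)"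
    using t finite_perms_on by (simp add: sum.delta' out_eq2)
  also have "(\<Sum>\<rho>\<in>S. v \<rho> * asep_rate q X \<rho> \<tau>) =
      (\<Sum>\<rho>\<in>S. \<Sum>x\<in>{-X..<X}. if \<rho> = swap_at \<tau> x then v \<rho> * rr q \<rho> x else 0)"
    unfolding asep_rate_def sum_distrib_left
    by (intro sum.cong refl) (auto simp: rr_def swap_at_eq_iff)
  also have "\<dots> = (\<Sum>x\<in>{-X..<X}. \<Sum>\<rho>\<in>S. if \<rho> = swap_at \<tau> x then v \<rho> * rr q \<rho> x else 0)"
    by (rule sum.swap)
  also have "\<dots> = (\<Sum>x\<in>{-X..<X}. v (swap_at \<tau> x) * rr q (swap_at \<tau> x) x)"
    by (rule sum.cong[OF refl]) (use t finite_perms_on swap_at_perms_on in \<open>auto simp: sum.delta'\<close>)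
  finally show ?thesis by (simp add: sum_subtractf sum_distrib_left)
qed

end

locale ack = ac +
  fixes k :: int
  assumes k0: "0 \<le> k" and kX: "k \<le> X"
begin

lemma term_eq:
  assumes t: "\<tau> \<in> S" and x: "- X \<le> x" "x < X"
    and v: "\<And>\<tau>. \<tau> \<in> S \<Longrightarrow> v \<tau> = f (Rm X k \<tau>) * wt q X k \<tau>"
  shows "v (swap_at \<tau> x) * rr q (swap_at \<tau> x) x - v \<tau> * rr q \<tau> x =
    (if Rm X k \<tau> x = - X - 1 \<and> Rm X k \<tau> (x + 1) = - X - 1 then 0
      else f (swap_at (Rm X k \<tau>) x) * rr q (swap_at (Rm X k \<tau>) x) x - f (Rm X k \<tau>) * rr q (Rm X k \<tau>) x)
     * wt q X k \<tau>"
proof -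
  have kk: "- X - 1 \<le> k" using k0 X0 by simp
  have st: "swap_at \<tau> x \<in> S" using swap_at_perms_on[OF t] x by simp
  show ?thesis
  proof (cases "\<tau> x \<le> k \<and> \<tau> (x + 1) \<le> k")
    case True
    have ne: "\<tau> x \<noteq> \<tau> (x + 1)" using perms_on_inj[OF t] by (metis injD add_cancel_left_right one_neq_zero)
    have "v (swap_at \<tau> x) * rr q (swap_at \<tau> x) x = f (Rm X k \<tau>) * (wt q X k (swap_at \<tau> x) * rr q (swap_at \<tau> x) x)"
      using v[OF st] Rm_swap_pp[of \<tau> x k X] True by simp
    also have "\<dots> = v \<tau> * rr q \<tau> x" using wt_swap_pp[OF x True[THEN conjunct1] True[THEN conjunct2] ne] v[OF t] by simp
    finally show ?thesis using True Rm_part[OF kk] by simp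
  next
    case False
    have F2: "\<not> (swap_at \<tau> x x \<le> k \<and> swap_at \<tau> x (x + 1) \<le> k)" using False by (auto simp: swap_at_def)
    have "v (swap_at \<tau> x) = f (swap_at (Rm X k \<tau>) x) * wt q X k \<tau>"
      using v[OF st] Rm_swap[of X k \<tau> x] card_swap_hole[OF x False] by (simp add: wt_def)
    moreover have "rr q (swap_at \<tau> x) x = rr q (swap_at (Rm X k \<tau>) x) x"
      using rr_Rm[OF kk F2, of q] Rm_swap[of X k \<tau> x] by simp
    moreover have "rr q \<tau> x = rr q (Rm X k \<tau>) x" using rr_Rm[OF kk False] by simp
    moreover have nc: "\<not> (Rm X k \<tau> x = - X - 1 \<and> Rm X k \<tau> (x + 1) = - X - 1)"
      using False Rm_part[OF kk] by simp
    ultimately show ?thesis using v[OF t] by (simp only: if_not_P[OF nc]) (simp add: algebra_simps)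
  qed
qed

lemma pres:
  assumes v: "\<And>\<tau>. \<tau> \<in> S \<Longrightarrow> v \<tau> = f (Rm X k \<tau>) * wt q X k \<tau>" and t: "\<tau> \<in> S"
  shows "(\<Sum>\<rho>\<in>S. v \<rho> * asep_gen q X \<rho> \<tau>) = Phi q X f (Rm X k \<tau>) * wt q X k \<tau>"
  unfolding vQ[OF t] Phi_def sum_distrib_right
  by (rule sum.cong[OF refl]) (rule term_eq[OF t _ _ v]; auto)

lemma perms_sub:
  assumes t: "\<tau> \<in> S" and fx: "\<forall>x\<in>{k+1..X}. \<tau> x = x"
  shows "\<tau> \<in> perms_on (-X) k"
proof -
  have inj: "inj \<tau>" by (rule perms_on_inj[OF t])
  have sub: "\<tau> ` {-X..k} \<subseteq> {-X..k}"
  proof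
    fix y assume "y \<in> \<tau> ` {-X..k}"
    then obtain x where x: "x \<in> {-X..k}" "y = \<tau> x" by auto
    have "x \<in> {-X..X}" using x kX by auto
    hence yi: "y \<in> {-X..X}" using perms_on_in[OF t] x by auto
    show "y \<in> {-X..k}"
    proof (rule ccontr)
      assume "y \<notin> {-X..k}"
      hence "y \<in> {k+1..X}" using yi by auto
      hence "\<tau> y = y" using fx by auto
      hence "y = x" using x inj by (metis injD)
      thus False using \<open>y \<notin> {-X..k}\<close> x by auto
    qed
  qed
  have sup: "{-X..k} \<subseteq> \<tau> ` {-X..k}"
  proof
    fix y assume y: "y \<in> {-X..k}"
    hence "y \<in> {-X..X}" using kX by auto
    hence "y \<in> \<tau> ` {-X..X}" using perms_on_bij[OF t] bij_betw_imp_surj_on by blast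
    then obtain x where x: "x \<in> {-X..X}" "y = \<tau> x" by auto
    have "x \<in> {-X..k}"
    proof (rule ccontr)
      assume "x \<notin> {-X..k}"
      hence "x \<in> {k+1..X}" using x by auto
      hence "\<tau> x = x" using fx by auto
      thus False using x y \<open>x \<in> {k+1..X}\<close> by auto
    qed
    thus "y \<in> \<tau> ` {-X..k}" using x by auto
  qed
  have "bij_betw \<tau> {-X..k} {-X..k}"
    unfolding bij_betw_def using sub sup inj_on_subset[OF inj] by auto
  moreover have "\<forall>x. x \<notin> {-X..k} \<longrightarrow> \<tau> x = x"
  proof (intro allI impI)
    fix x assume x: "x \<notin> {-X..k}"
    show "\<tau> x = x"
    proof (cases "x \<in> {-X..X}")
      case True thus ?thesis using x fx by auto
    next
      case False thus ?thesis using perms_on_out[OF t] by auto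
    qed
  qed
  ultimately show ?thesis unfolding perms_on_def by blast
qed

lemma perms_sub2:
  assumes t: "\<tau> \<in> perms_on (-X) k"
  shows "\<tau> \<in> S" "\<forall>x\<in>{k+1..X}. \<tau> x = x"
proof -
  show "\<forall>x\<in>{k+1..X}. \<tau> x = x" using perms_on_out[OF t] by auto
  have "{-X..X} = {-X..k} \<union> {k+1..X}" using kX k0 by auto
  have b1: "bij_betw \<tau> {-X..k} {-X..k}" by (rule perms_on_bij[OF t])
  have b2: "bij_betw \<tau> {k+1..X} {k+1..X}"
    using perms_on_out[OF t] by (simp add: bij_betw_def inj_on_def)
  have "bij_betw \<tau> ({-X..k} \<union> {k+1..X}) ({-X..k} \<union> {k+1..X})"
    by (rule bij_betw_combine[OF b1 b2]) auto
  hence "bij_betw \<tau> {-X..X} {-X..X}" using \<open>{-X..X} = {-X..k} \<union> {k+1..X}\<close> by simp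
  moreover have "\<forall>x. x \<notin> {-X..X} \<longrightarrow> \<tau> x = x" using perms_on_out[OF t] kX by auto
  ultimately show "\<tau> \<in> S" unfolding perms_on_def by blast
qed

definition Zm :: real where "Zm = (\<Sum>\<sigma>\<in>perms_on (-X) k. mallows_weight q (-X) k \<sigma>)"

definition f0 :: "(int \<Rightarrow> int) \<Rightarrow> real" where
  "f0 \<rho> = (if \<forall>x\<in>{k+1..X}. \<rho> x = x then 1 / Zm else 0)"

lemma Rm_fix: "x \<in> {k+1..X} \<Longrightarrow> (Rm X k \<tau> x = x) = (\<tau> x = x)"
  using k0 X0 by (auto simp: Rm_def)

lemma mw_wt: "\<tau> \<in> perms_on (-X) k \<Longrightarrow> mallows_weight q (-X) k \<tau> = wt q X k \<tau>"
proof -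
  assume t: "\<tau> \<in> perms_on (-X) k"
  have "{(i, j). - X \<le> i \<and> i < j \<and> j \<le> k \<and> \<tau> i < \<tau> j} = NI X k \<tau>"
  proof (rule set_eqI, clarify)
    fix i j
    show "((i, j) \<in> {(i, j). - X \<le> i \<and> i < j \<and> j \<le> k \<and> \<tau> i < \<tau> j}) = ((i, j) \<in> NI X k \<tau>)"
    proof
      assume a: "(i, j) \<in> {(i, j). - X \<le> i \<and> i < j \<and> j \<le> k \<and> \<tau> i < \<tau> j}"
      hence "j \<in> {-X..k}" by auto
      hence "\<tau> j \<in> {-X..k}" using perms_on_in[OF t] by blast
      thus "(i, j) \<in> NI X k \<tau>" using a kX by (auto simp: NI_def)
    next
      assume a: "(i, j) \<in> NI X k \<tau>"
      have "j \<le> k"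
      proof (rule ccontr)
        assume "\<not> j \<le> k"
        hence "\<tau> j = j" using perms_on_out[OF t] by auto
        thus False using a \<open>\<not> j \<le> k\<close> by (auto simp: NI_def)
      qed
      thus "(i, j) \<in> {(i, j). - X \<le> i \<and> i < j \<and> j \<le> k \<and> \<tau> i < \<tau> j}" using a by (auto simp: NI_def)
    qed
  qed
  thus ?thesis by (simp add: mallows_weight_def wt_def)
qed

lemma mallows_form:
  assumes t: "\<tau> \<in> S"
  shows "mallows q (-X) k \<tau> = f0 (Rm X k \<tau>) * wt q X k \<tau>"
proof (cases "\<tau> \<in> perms_on (-X) k")
  case True
  hence "\<forall>x\<in>{k+1..X}. Rm X k \<tau> x = x" using perms_sub2(2) Rm_fix by blast
  thus ?thesis using True mw_wt[OF True] by (simp add: mallows_def f0_def Zm_def)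
next
  case False
  hence "\<not> (\<forall>x\<in>{k+1..X}. Rm X k \<tau> x = x)" using perms_sub[OF t] Rm_fix by blast
  hence "f0 (Rm X k \<tau>) = 0" unfolding f0_def by (simp only: if_False)
  thus ?thesis using False by (simp add: mallows_def)
qed

definition vn :: "nat \<Rightarrow> (int \<Rightarrow> int) \<Rightarrow> real" where
  "vn n \<tau> = (\<Sum>\<sigma>\<in>S. mallows q (-X) k \<sigma> * asep_gen_pow q X n \<sigma> \<tau>)"

lemma vn_Suc: "vn (Suc n) \<tau> = (\<Sum>\<rho>\<in>S. vn n \<rho> * asep_gen q X \<rho> \<tau>)"
proof -
  have "vn (Suc n) \<tau> = (\<Sum>\<sigma>\<in>S. \<Sum>\<rho>\<in>S. mallows q (-X) k \<sigma> * asep_gen_pow q X n \<sigma> \<rho> * asep_gen q X \<rho> \<tau>)"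
    unfolding vn_def asep_gen_pow.simps sum_distrib_left by (simp add: mult.assoc)
  also have "\<dots> = (\<Sum>\<rho>\<in>S. \<Sum>\<sigma>\<in>S. mallows q (-X) k \<sigma> * asep_gen_pow q X n \<sigma> \<rho> * asep_gen q X \<rho> \<tau>)"
    by (rule sum.swap)
  also have "\<dots> = (\<Sum>\<rho>\<in>S. vn n \<rho> * asep_gen q X \<rho> \<tau>)"
    unfolding vn_def sum_distrib_right by simp
  finally show ?thesis .
qed

lemma vn_form: "\<tau> \<in> S \<Longrightarrow> vn n \<tau> = ((Phi q X ^^ n) f0) (Rm X k \<tau>) * wt q X k \<tau>"
proof (induction n arbitrary: \<tau>)
  case 0
  have "vn 0 \<tau> = mallows q (-X) k \<tau>"
    using 0 finite_perms_on by (simp add: vn_def if_distrib sum.delta' cong: if_cong)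
  thus ?case using mallows_form[OF 0] by simp
next
  case (Suc n)
  show ?case unfolding vn_Suc funpow.simps o_apply by (rule pres[OF Suc.IH Suc.prems])
qed

end


context ack
begin


lemma perms_surj: assumes t: "\<tau> \<in> S" shows "\<exists>x. \<tau> x = y"
proof (cases "y \<in> {-X..X}")
  case True
  hence "y \<in> \<tau> ` {-X..X}" using perms_on_bij[OF t] bij_betw_imp_surj_on by blast
  thus ?thesis by auto
next
  case False thus ?thesis using perms_on_out[OF t] by blast
qed


lemma perms_bij: assumes t: "\<tau> \<in> S" shows "bij \<tau>"
  using perms_on_inj[OF t] perms_surj[OF t] by (metis bijI surjI)

lemma inv_app: "\<tau> \<in> S \<Longrightarrow> \<tau> (inv \<tau> y) = y"
  using perms_bij bij_is_surj surj_f_inv_f by metis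

lemma app_inv: "\<tau> \<in> S \<Longrightarrow> inv \<tau> (\<tau> x) = x"
  using perms_on_inj inv_f_f by metis

definition G :: "int \<Rightarrow> (int \<Rightarrow> int) \<Rightarrow> int set" where
  "G l \<tau> = {j. inv \<tau> l < j \<and> j \<le> X \<and> l < \<tau> j \<and> \<tau> j \<le> k}"

definition cnt :: "int \<Rightarrow> (int \<Rightarrow> int) \<Rightarrow> nat" where
  "cnt l \<tau> = card (G l \<tau>)"

definition psi :: "int \<Rightarrow> (int \<Rightarrow> int) \<Rightarrow> int \<Rightarrow> int" where
  "psi l \<tau> = \<tau> \<circ> tr (inv \<tau> l) (Min (G l \<tau>))"

definition Fb :: "(int \<Rightarrow> int) \<Rightarrow> (int \<Rightarrow> int) set" where
  "Fb r = {\<tau> \<in> S. Rm X k \<tau> = r}"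

lemma finite_G: "finite (G l \<tau>)"
  unfolding G_def by (rule finite_subset[of _ "{inv \<tau> l..X}"]) auto

lemma finite_Fb: "finite (Fb r)"
  unfolding Fb_def using finite_perms_on by simp

lemma wt_nonneg: "wt q X k \<tau> \<ge> 0"
  using q0 by (simp add: wt_def)

lemma step_facts:
  assumes t: "\<tau> \<in> S" and l: "l \<in> {-X..k}" and c: "cnt l \<tau> \<ge> 1"
  defines "p \<equiv> inv \<tau> l" and "s \<equiv> Min (G l \<tau>)"
  shows "\<tau> p = l" "- X \<le> p" "p < s" "s \<le> X" "l < \<tau> s" "\<tau> s \<le> k"
    "\<And>z. p < z \<Longrightarrow> z < s \<Longrightarrow> \<not> (l < \<tau> z \<and> \<tau> z \<le> k)"
    "G l \<tau> = insert s (G l (\<tau> \<circ> tr p s))" "s \<notin> G l (\<tau> \<circ> tr p s)"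
    "psi l \<tau> = \<tau> \<circ> tr p s"
proof -
  show tp: "\<tau> p = l" unfolding p_def by (rule inv_app[OF t])
  have ne: "G l \<tau> \<noteq> {}" using c by (auto simp: cnt_def)
  have sG: "s \<in> G l \<tau>" unfolding s_def by (rule Min_in[OF finite_G ne])
  thus ps: "p < s" "s \<le> X" "l < \<tau> s" "\<tau> s \<le> k" unfolding G_def p_def by auto
  show pX: "- X \<le> p"
  proof (rule ccontr)
    assume "\<not> - X \<le> p"
    hence "\<tau> p = p" using perms_on_out[OF t] by auto
    thus False using tp l \<open>\<not> - X \<le> p\<close> by auto
  qed
  show btw: "\<And>z. p < z \<Longrightarrow> z < s \<Longrightarrow> \<not> (l < \<tau> z \<and> \<tau> z \<le> k)"
  proof
    fix z assume z: "p < z" "z < s" "l < \<tau> z \<and> \<tau> z \<le> k"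
    have "z \<le> X" using z ps by auto
    hence "z \<in> G l \<tau>" using z unfolding G_def p_def by auto
    hence "s \<le> z" unfolding s_def by (rule Min_le[OF finite_G])
    thus False using z by auto
  qed
  have ts: "\<tau> \<circ> tr p s \<in> S" using perms_on_comp_tr[OF t, of p s] pX ps by auto
  have ip: "inv (\<tau> \<circ> tr p s) l = s"
  proof -
    have "(\<tau> \<circ> tr p s) s = l" using tp by (simp add: tr_def)
    thus ?thesis using app_inv[OF ts, of s] by simp
  qed
  have G2: "G l (\<tau> \<circ> tr p s) = {j. s < j \<and> j \<le> X \<and> l < \<tau> j \<and> \<tau> j \<le> k}"
  proof -
    have "\<And>j. s < j \<Longrightarrow> (\<tau> \<circ> tr p s) j = \<tau> j" using ps by (auto simp: tr_def)
    thus ?thesis unfolding G_def ip by auto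
  qed
  show "s \<notin> G l (\<tau> \<circ> tr p s)" unfolding G2 by simp
  show "G l \<tau> = insert s (G l (\<tau> \<circ> tr p s))"
  proof
    show "G l \<tau> \<subseteq> insert s (G l (\<tau> \<circ> tr p s))"
    proof
      fix j assume j: "j \<in> G l \<tau>"
      hence "s \<le> j" unfolding s_def by (rule Min_le[OF finite_G])
      show "j \<in> insert s (G l (\<tau> \<circ> tr p s))" unfolding G2
        using j \<open>s \<le> j\<close> unfolding G_def by auto
    qed
    show "insert s (G l (\<tau> \<circ> tr p s)) \<subseteq> G l \<tau>"
      unfolding G2 using sG ps unfolding G_def p_def by auto
  qed
  show "psi l \<tau> = \<tau> \<circ> tr p s" unfolding psi_def p_def s_def ..
qed

lemma psi_props:
  assumes t: "\<tau> \<in> Fb r" and l: "l \<in> {-X..k}" and c: "cnt l \<tau> \<ge> Suc j"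
  shows "psi l \<tau> \<in> Fb r" "wt q X k \<tau> = q * wt q X k (psi l \<tau>)" "cnt l (psi l \<tau>) \<ge> j"
proof -
  have tS: "\<tau> \<in> S" and tr': "Rm X k \<tau> = r" using t by (auto simp: Fb_def)
  have c1: "cnt l \<tau> \<ge> 1" using c by simp
  define p where "p = inv \<tau> l"
  define s where "s = Min (G l \<tau>)"
  note F = step_facts[OF tS l c1, folded p_def s_def]
  have ts: "\<tau> \<circ> tr p s \<in> S" using perms_on_comp_tr[OF tS, of p s] F by auto
  have "Rm X k (\<tau> \<circ> tr p s) = Rm X k \<tau>"
    using F(1,6) l by (auto simp: Rm_def tr_def)
  thus "psi l \<tau> \<in> Fb r" using ts tr' F(10) by (simp add: Fb_def)
  have btw: "(\<tau> z < \<tau> p \<and> \<tau> z < \<tau> s \<and> \<tau> p \<le> k \<and> \<tau> s \<le> k) \<or> (\<tau> p < \<tau> z \<and> \<tau> s < \<tau> z)"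
    if z: "p < z" "z < s" for z
  proof -
    have "\<tau> z \<noteq> l" using F(1) z perms_on_inj[OF tS] by (metis injD less_irrefl)
    thus ?thesis using F(7)[OF z] F(1,5,6) l by auto
  qed
  have cc: "card (NI X k (\<tau> \<circ> tr p s) - {(p, s)}) = card (NI X k \<tau> - {(p, s)})"
    by (rule NI_tr_card) (use F btw in auto)
  have a1: "card (NI X k \<tau>) = card (NI X k \<tau> - {(p, s)}) + 1"
    using card_NI_split'[of X k \<tau> p s] F l by auto
  have a2: "card (NI X k (\<tau> \<circ> tr p s)) = card (NI X k (\<tau> \<circ> tr p s) - {(p, s)})"
    using card_NI_split'[of X k "\<tau> \<circ> tr p s" p s] F l by (auto simp: tr_def)
  show "wt q X k \<tau> = q * wt q X k (psi l \<tau>)"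
    unfolding F(10) wt_def a1 a2 cc by simp
  have "cnt l \<tau> = Suc (cnt l (psi l \<tau>))"
    unfolding cnt_def F(10) F(8) using F(9) finite_G by simp
  thus "cnt l (psi l \<tau>) \<ge> j" using c by simp
qed

lemma psi_inj:
  assumes l: "l \<in> {-X..k}"
  shows "inj_on (psi l) {\<tau> \<in> Fb r. cnt l \<tau> \<ge> 1}"
proof (rule inj_onI)
  fix \<tau>1 \<tau>2 assume a1: "\<tau>1 \<in> {\<tau> \<in> Fb r. cnt l \<tau> \<ge> 1}" and a2: "\<tau>2 \<in> {\<tau> \<in> Fb r. cnt l \<tau> \<ge> 1}"
    and e: "psi l \<tau>1 = psi l \<tau>2"
  have t1: "\<tau>1 \<in> S" "cnt l \<tau>1 \<ge> 1" and t2: "\<tau>2 \<in> S" "cnt l \<tau>2 \<ge> 1" using a1 a2 by (auto simp: Fb_def)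
  define p1 where "p1 = inv \<tau>1 l"
  define s1 where "s1 = Min (G l \<tau>1)"
  define p2 where "p2 = inv \<tau>2 l"
  define s2 where "s2 = Min (G l \<tau>2)"
  note F1 = step_facts[OF t1(1) l t1(2), folded p1_def s1_def]
  note F2 = step_facts[OF t2(1) l t2(2), folded p2_def s2_def]
  define \<sigma> where "\<sigma> = psi l \<tau>1"
  have s1e: "\<sigma> = \<tau>1 \<circ> tr p1 s1" unfolding \<sigma>_def by (rule F1(10))
  have s2e: "\<sigma> = \<tau>2 \<circ> tr p2 s2" unfolding \<sigma>_def e by (rule F2(10))
  have sS: "\<sigma> \<in> S" using s1e perms_on_comp_tr[OF t1(1), of p1 s1] F1 by auto
  have "\<sigma> s1 = l" unfolding s1e using F1(1) by (simp add: tr_def)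
  moreover have "\<sigma> s2 = l" unfolding s2e using F2(1) by (simp add: tr_def)
  ultimately have ss: "s1 = s2" using perms_on_inj[OF sS] by (metis injD)
  have key: "y \<le> p1" if y: "y < s1" "l < \<sigma> y" "\<sigma> y \<le> k" for y
  proof (rule ccontr)
    assume y4: "\<not> y \<le> p1"
    hence "\<sigma> y = \<tau>1 y" using s1e y by (auto simp: tr_def)
    thus False using F1(7)[of y] y y4 by auto
  qed
  have key2: "y \<le> p2" if y: "y < s2" "l < \<sigma> y" "\<sigma> y \<le> k" for y
  proof (rule ccontr)
    assume y4: "\<not> y \<le> p2"
    hence "\<sigma> y = \<tau>2 y" using s2e y by (auto simp: tr_def)
    thus False using F2(7)[of y] y y4 by auto
  qed
  have "\<sigma> p1 = \<tau>1 s1" unfolding s1e by (simp add: tr_def)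
  moreover have "\<sigma> p2 = \<tau>2 s2" unfolding s2e by (simp add: tr_def)
  ultimately have "p2 \<le> p1" "p1 \<le> p2" using key[of p2] key2[of p1] F1 F2 ss by auto
  hence pp: "p1 = p2" by simp
  have "\<tau>1 = \<sigma> \<circ> tr p1 s1" using s1e by (simp add: tr_comp_tr)
  also have "\<dots> = \<tau>2" using s2e pp ss by (simp add: tr_comp_tr)
  finally show "\<tau>1 = \<tau>2" .
qed

lemma tail_bound:
  assumes l: "l \<in> {-X..k}"
  shows "(\<Sum>\<tau>\<in>{\<tau> \<in> Fb r. cnt l \<tau> \<ge> j}. wt q X k \<tau>) \<le> q ^ j * (\<Sum>\<tau>\<in>Fb r. wt q X k \<tau>)"
proof (induction j)
  case 0 thus ?case by simp
next
  case (Suc j)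
  let ?A = "{\<tau> \<in> Fb r. cnt l \<tau> \<ge> Suc j}"
  let ?B = "{\<tau> \<in> Fb r. cnt l \<tau> \<ge> j}"
  have inj: "inj_on (psi l) ?A"
    by (rule inj_on_subset[OF psi_inj[OF l, of r]]) auto
  have "(\<Sum>\<tau>\<in>?A. wt q X k \<tau>) = (\<Sum>\<tau>\<in>?A. q * wt q X k (psi l \<tau>))"
    by (rule sum.cong[OF refl]) (use psi_props[OF _ l] in auto)
  also have "\<dots> = q * (\<Sum>\<tau>\<in>psi l ` ?A. wt q X k \<tau>)"
    by (simp add: sum_distrib_left sum.reindex[OF inj])
  also have "\<dots> \<le> q * (\<Sum>\<tau>\<in>?B. wt q X k \<tau>)"
  proof (rule mult_left_mono[OF sum_mono2 q0])
    show "finite ?B" using finite_Fb by simp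
    show "psi l ` ?A \<subseteq> ?B" using psi_props[OF _ l] by auto
    show "\<And>b. b \<in> ?B - psi l ` ?A \<Longrightarrow> 0 \<le> wt q X k b" using wt_nonneg by simp
  qed
  also have "\<dots> \<le> q * (q ^ j * (\<Sum>\<tau>\<in>Fb r. wt q X k \<tau>))"
    by (rule mult_left_mono[OF Suc q0])
  finally show ?case by simp
qed

end


context ack
begin

lemma mallows_nonneg: "mallows q (-X) k \<sigma> \<ge> 0"
  unfolding mallows_def mallows_weight_def using q0
  by (auto intro!: divide_nonneg_nonneg sum_nonneg)

lemma mallows_total: "(\<Sum>\<sigma>\<in>S. mallows q (-X) k \<sigma>) \<le> 1"
proof -
  have sub: "perms_on (-X) k \<subseteq> S" using perms_sub2(1) by blast
  have "(\<Sum>\<sigma>\<in>S. mallows q (-X) k \<sigma>) =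
      (\<Sum>\<sigma>\<in>S. if \<sigma> \<in> perms_on (-X) k then mallows_weight q (-X) k \<sigma> / Zm else 0)"
    by (rule sum.cong[OF refl]) (simp add: mallows_def Zm_def)
  also have "\<dots> = (\<Sum>\<sigma>\<in>{\<sigma>\<in>S. \<sigma> \<in> perms_on (-X) k}. mallows_weight q (-X) k \<sigma> / Zm)"
    by (rule sum.inter_filter[OF finite_perms_on, symmetric])
  also have "{\<sigma>\<in>S. \<sigma> \<in> perms_on (-X) k} = perms_on (-X) k" using sub by blast
  also have "(\<Sum>\<sigma>\<in>perms_on (-X) k. mallows_weight q (-X) k \<sigma> / Zm) = Zm / Zm"
    unfolding Zm_def by (rule sum_divide_distrib[symmetric])
  also have "\<dots> \<le> 1" by (cases "Zm = 0") auto
  finally show ?thesis .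
qed

definition nu :: "real \<Rightarrow> (int \<Rightarrow> int) \<Rightarrow> real" where
  "nu t \<tau> = (\<Sum>\<sigma>\<in>S. mallows q (-X) k \<sigma> * asep_trans q X t \<sigma> \<tau>)"

lemma prob_nu: "asep_prob_dot q X k t E = (\<Sum>\<tau>\<in>{\<tau>\<in>S. E \<tau>}. nu t \<tau>)"
  unfolding asep_prob_dot_def nu_def by (rule sum.swap)

lemma nu_nonneg: "\<tau> \<in> S \<Longrightarrow> t \<ge> 0 \<Longrightarrow> nu t \<tau> \<ge> 0"
  unfolding nu_def by (intro sum_nonneg mult_nonneg_nonneg mallows_nonneg trans_nonneg)

lemma nu_total: "(\<Sum>\<tau>\<in>S. nu t \<tau>) \<le> 1"
proof -
  have "(\<Sum>\<tau>\<in>S. nu t \<tau>) = (\<Sum>\<sigma>\<in>S. mallows q (-X) k \<sigma> * (\<Sum>\<tau>\<in>S. asep_trans q X t \<sigma> \<tau>))"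
    unfolding nu_def sum_distrib_left by (rule sum.swap)
  also have "\<dots> = (\<Sum>\<sigma>\<in>S. mallows q (-X) k \<sigma>)"
    by (rule sum.cong[OF refl]) (simp add: trans_rowsum)
  also have "\<dots> \<le> 1" by (rule mallows_total)
  finally show ?thesis .
qed

definition FF :: "real \<Rightarrow> (int \<Rightarrow> int) \<Rightarrow> real" where
  "FF t \<rho> = (\<Sum>n. t ^ n / fact n * ((Phi q X ^^ n) f0) \<rho>)"

lemma nu_form:
  assumes t: "\<tau> \<in> S"
  shows "nu t \<tau> = FF t (Rm X k \<tau>) * wt q X k \<tau>"
proof -
  define h where "h = (\<lambda>n. t ^ n / fact n * ((Phi q X ^^ n) f0) (Rm X k \<tau>))"
  have sm: "\<And>\<sigma>. summable (\<lambda>n. mallows q (-X) k \<sigma> * (t ^ n / fact n * asep_gen_pow q X n \<sigma> \<tau>))"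
    by (rule summable_mult[OF summable_pow'])
  have "nu t \<tau> = (\<Sum>\<sigma>\<in>S. \<Sum>n. mallows q (-X) k \<sigma> * (t ^ n / fact n * asep_gen_pow q X n \<sigma> \<tau>))"
    unfolding nu_def asep_trans_def
    by (rule sum.cong[OF refl]) (rule suminf_mult[OF summable_pow', symmetric])
  also have "\<dots> = (\<Sum>n. \<Sum>\<sigma>\<in>S. mallows q (-X) k \<sigma> * (t ^ n / fact n * asep_gen_pow q X n \<sigma> \<tau>))"
    by (rule suminf_sum[symmetric]) (rule sm)
  also have "(\<lambda>n. \<Sum>\<sigma>\<in>S. mallows q (-X) k \<sigma> * (t ^ n / fact n * asep_gen_pow q X n \<sigma> \<tau>)) = (\<lambda>n. h n * wt q X k \<tau>)"
  proof (rule ext)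
    fix n
    have "(\<Sum>\<sigma>\<in>S. mallows q (-X) k \<sigma> * (t ^ n / fact n * asep_gen_pow q X n \<sigma> \<tau>)) = t ^ n / fact n * vn n \<tau>"
      unfolding vn_def sum_distrib_left by (rule sum.cong[OF refl]) (simp add: mult_ac)
    thus "(\<Sum>\<sigma>\<in>S. mallows q (-X) k \<sigma> * (t ^ n / fact n * asep_gen_pow q X n \<sigma> \<tau>)) = h n * wt q X k \<tau>"
      by (simp add: vn_form[OF t] h_def)
  qed
  finally have nu1: "nu t \<tau> = (\<Sum>n. h n * wt q X k \<tau>)" .
  have s1: "summable (\<lambda>n. h n * wt q X k \<tau>)"
  proof -
    have "summable (\<lambda>n. \<Sum>\<sigma>\<in>S. mallows q (-X) k \<sigma> * (t ^ n / fact n * asep_gen_pow q X n \<sigma> \<tau>))"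
      by (rule summable_sum) (rule sm)
    thus ?thesis using \<open>(\<lambda>n. \<Sum>\<sigma>\<in>S. _) = _\<close> by simp
  qed
  show ?thesis
  proof (cases "wt q X k \<tau> = 0")
    case True thus ?thesis using nu1 by simp
  next
    case False
    have "summable (\<lambda>n. h n * wt q X k \<tau> * (1 / wt q X k \<tau>))" by (rule summable_mult2[OF s1])
    hence sh: "summable h" using False by simp
    have "nu t \<tau> = suminf h * wt q X k \<tau>" unfolding nu1 by (rule suminf_mult2[OF sh, symmetric])
    thus ?thesis by (simp add: FF_def h_def)
  qed
qed

lemma main_ineq:
  fixes t c :: real
  assumes t0: "t \<ge> 0" and c0: "c \<ge> 0"
    and fib: "\<And>r. (\<Sum>\<tau>\<in>{\<tau>\<in>Fb r. E \<tau>}. wt q X k \<tau>) \<le> c * (\<Sum>\<tau>\<in>Fb r. wt q X k \<tau>)"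
  shows "asep_prob_dot q X k t E \<le> c"
proof -
  let ?g = "\<lambda>\<tau>. nu t \<tau> * (c - (if E \<tau> then 1 else 0))"
  have grp: "(\<Sum>\<tau>\<in>S. ?g \<tau>) = (\<Sum>r\<in>Rm X k ` S. \<Sum>\<tau>\<in>Fb r. ?g \<tau>)"
    unfolding Fb_def by (rule sum.image_gen[OF finite_perms_on])
  have each: "0 \<le> (\<Sum>\<tau>\<in>Fb r. ?g \<tau>)" for r
  proof -
    have "(\<Sum>\<tau>\<in>Fb r. ?g \<tau>) = FF t r * (\<Sum>\<tau>\<in>Fb r. wt q X k \<tau> * (c - (if E \<tau> then 1 else 0)))"
      unfolding sum_distrib_left
      by (rule sum.cong[OF refl]) (auto simp: Fb_def nu_form)
    also have "(\<Sum>\<tau>\<in>Fb r. wt q X k \<tau> * (c - (if E \<tau> then 1 else 0))) =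
        (\<Sum>\<tau>\<in>Fb r. c * wt q X k \<tau> - (if E \<tau> then wt q X k \<tau> else 0))"
      by (rule sum.cong[OF refl]) (simp add: algebra_simps)
    also have "\<dots> = c * (\<Sum>\<tau>\<in>Fb r. wt q X k \<tau>) - (\<Sum>\<tau>\<in>{\<tau>\<in>Fb r. E \<tau>}. wt q X k \<tau>)"
      by (simp only: sum_subtractf sum_distrib_left sum.inter_filter[OF finite_Fb])
    finally have eq: "(\<Sum>\<tau>\<in>Fb r. ?g \<tau>) = FF t r * (c * (\<Sum>\<tau>\<in>Fb r. wt q X k \<tau>) - (\<Sum>\<tau>\<in>{\<tau>\<in>Fb r. E \<tau>}. wt q X k \<tau>))" .
    have G0: "0 \<le> c * (\<Sum>\<tau>\<in>Fb r. wt q X k \<tau>) - (\<Sum>\<tau>\<in>{\<tau>\<in>Fb r. E \<tau>}. wt q X k \<tau>)"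
      using fib[of r] by simp
    show ?thesis
    proof (cases "FF t r \<ge> 0")
      case True thus ?thesis using eq G0 by simp
    next
      case False
      have w0: "wt q X k \<tau> = 0" if "\<tau> \<in> Fb r" for \<tau>
      proof -
        have tS: "\<tau> \<in> S" "Rm X k \<tau> = r" using that by (auto simp: Fb_def)
        have "0 \<le> FF t r * wt q X k \<tau>" using nu_nonneg[OF tS(1) t0] nu_form[OF tS(1)] tS(2) by simp
        thus ?thesis using False wt_nonneg[of \<tau>] by (simp add: zero_le_mult_iff)
      qed
      have "(\<Sum>\<tau>\<in>Fb r. ?g \<tau>) = 0"
        by (rule sum.neutral) (auto simp: Fb_def nu_form w0)
      thus ?thesis by simp
    qed
  qed
  have "0 \<le> (\<Sum>\<tau>\<in>S. ?g \<tau>)" unfolding grp by (intro sum_nonneg each)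
  also have "(\<Sum>\<tau>\<in>S. ?g \<tau>) = (\<Sum>\<tau>\<in>S. c * nu t \<tau> - (if E \<tau> then nu t \<tau> else 0))"
    by (rule sum.cong[OF refl]) (simp add: algebra_simps)
  also have "\<dots> = c * (\<Sum>\<tau>\<in>S. nu t \<tau>) - (\<Sum>\<tau>\<in>{\<tau>\<in>S. E \<tau>}. nu t \<tau>)"
    by (simp only: sum_subtractf sum_distrib_left sum.inter_filter[OF finite_perms_on])
  finally have "(\<Sum>\<tau>\<in>{\<tau>\<in>S. E \<tau>}. nu t \<tau>) \<le> c * (\<Sum>\<tau>\<in>S. nu t \<tau>)" by simp
  also have "\<dots> \<le> c * 1" by (rule mult_left_mono[OF nu_total c0])
  finally show ?thesis by (simp add: prob_nu)
qed

end


lemma sum_ind_int: "finite A \<Longrightarrow> (\<Sum>y\<in>A. if P y then 1 else 0 :: int) = int (card {y\<in>A. P y})"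
  by (simp add: sum.inter_filter[symmetric])

lemma card_int_ivl: "- X \<le> x + 1 \<Longrightarrow> int (card {-X..x}) = x + X + 1"
  by simp

context ack
begin

lemma height'_eq:
  assumes "- X \<le> x" "x \<le> X"
  shows "height' (-X) X (cut k \<tau>) x = 2 * X + 2 + x - 2 * int (card {y\<in>{-X..x}. \<tau> y \<le> k})"
proof -
  have "(\<Sum>y\<in>{-X..x}. 1 - 2 * (if y > X then 1 else cut k \<tau> y)) =
        (\<Sum>y\<in>{-X..x}. 1 - 2 * (if \<tau> y \<le> k then 1 else 0 :: int))"
    by (rule sum.cong[OF refl]) (use assms in \<open>auto simp: cut_def\<close>)
  also have "\<dots> = int (card {-X..x}) - 2 * int (card {y\<in>{-X..x}. \<tau> y \<le> k})"
    by (simp add: sum_subtractf sum_distrib_left[symmetric] sum_ind_int)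
  finally show ?thesis using assms by (simp add: height'_def)
qed

lemma height_eq:
  assumes "- X \<le> x" "x \<le> X" "\<forall>y\<in>{-X..x}. \<not> \<tau> y \<le> l"
  shows "height (-X) X (cut l \<tau>) x = x"
proof -
  have "(\<Sum>y\<in>{-X..x}. 1 - 2 * (if y > X then 1 else cut l \<tau> y)) = (\<Sum>y\<in>{-X..x}. 1)"
    by (rule sum.cong[OF refl]) (use assms in \<open>auto simp: cut_def\<close>)
  thus ?thesis using assms by (simp add: height_def)
qed

lemma total_count:
  assumes t: "\<tau> \<in> S"
  shows "int (card {y\<in>{-X..X}. \<tau> y \<le> k}) = k + X + 1"
proof -
  have inj: "inj_on \<tau> {y\<in>{-X..X}. \<tau> y \<le> k}" using perms_on_inj[OF t] inj_on_subset by blast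
  have "\<tau> ` {y\<in>{-X..X}. \<tau> y \<le> k} = {-X..k}"
  proof
    show "\<tau> ` {y\<in>{-X..X}. \<tau> y \<le> k} \<subseteq> {-X..k}" using perms_on_in[OF t] by fastforce
    show "{-X..k} \<subseteq> \<tau> ` {y\<in>{-X..X}. \<tau> y \<le> k}"
    proof
      fix v assume v: "v \<in> {-X..k}"
      hence "v \<in> {-X..X}" using kX by auto
      hence "v \<in> \<tau> ` {-X..X}" using perms_on_bij[OF t] bij_betw_imp_surj_on by blast
      then obtain y where "y \<in> {-X..X}" "v = \<tau> y" by auto
      thus "v \<in> \<tau> ` {y\<in>{-X..X}. \<tau> y \<le> k}" using v by auto
    qed
  qed
  hence "card {y\<in>{-X..X}. \<tau> y \<le> k} = card {-X..k}" using card_image[OF inj] by simp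
  thus ?thesis using k0 X0 by simp
qed

lemma E1_count:
  fixes x1 a :: int and b :: real
  assumes t: "\<tau> \<in> S" and x1: "0 \<le> x1" "0 \<le> a" "x1 + a < X"
    and E1: "real_of_int (height' (-X) X (cut k \<tau>) x1) > real_of_int x1 + b"
  shows "real (card {y\<in>{x1+a<..X}. \<tau> y \<le> k}) > real_of_int k + b / 2 - real_of_int a"
proof -
  let ?A1 = "{y\<in>{-X..x1}. \<tau> y \<le> k}"
  let ?A2 = "{y\<in>{x1<..x1+a}. \<tau> y \<le> k}"
  let ?A3 = "{y\<in>{x1+a<..X}. \<tau> y \<le> k}"
  have h: "height' (-X) X (cut k \<tau>) x1 = 2 * X + 2 + x1 - 2 * int (card ?A1)"
    by (rule height'_eq) (use x1 X0 in auto)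
  have a1: "real (card ?A1) < real_of_int X + 1 - b / 2" using E1 unfolding h by simp
  have un: "{y\<in>{-X..X}. \<tau> y \<le> k} = ?A1 \<union> ?A2 \<union> ?A3" using x1 X0 by auto
  have f1: "finite ?A1" by (rule finite_subset[of _ "{-X..x1}"]) auto
  have f2: "finite ?A2" by (rule finite_subset[of _ "{x1<..x1+a}"]) auto
  have f3: "finite ?A3" by (rule finite_subset[of _ "{x1+a<..X}"]) auto
  have d12: "?A1 \<inter> ?A2 = {}" by auto
  have d3: "(?A1 \<union> ?A2) \<inter> ?A3 = {}" using x1 by auto
  have "card {y\<in>{-X..X}. \<tau> y \<le> k} = card ?A1 + card ?A2 + card ?A3"
    unfolding un card_Un_disjoint[OF finite_UnI[OF f1 f2] f3 d3] card_Un_disjoint[OF f1 f2 d12] ..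
  hence tot: "int (card ?A1) + int (card ?A2) + int (card ?A3) = k + X + 1"
    using total_count[OF t] by simp
  have "card ?A2 \<le> card {x1<..x1+a}" by (rule card_mono) auto
  hence a2: "int (card ?A2) \<le> a" using x1 by simp
  have "real_of_int (int (card ?A3)) > real_of_int k + b / 2 - real_of_int a"
  proof -
    have "real_of_int (int (card ?A1)) + real_of_int (int (card ?A2)) + real_of_int (int (card ?A3)) =
          real_of_int k + real_of_int X + 1"
      using arg_cong[OF tot, of real_of_int] by simp
    moreover have "real_of_int (int (card ?A2)) \<le> real_of_int a" using a2 by linarith
    ultimately show ?thesis using a1 by simp
  qed
  thus ?thesis by simp
qed

lemma E2_exists:
  fixes x0 :: int
  assumes "0 \<le> x0" "x0 \<le> X" "height (-X) X (cut (- X + k - 1) \<tau>) x0 < x0"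
  shows "\<exists>y\<in>{-X..x0}. \<tau> y \<le> - X + k - 1"
  using height_eq[of x0 \<tau> "- X + k - 1"] assms X0 by force

lemma cnt_bound:
  fixes x0 :: int
  assumes t: "\<tau> \<in> S" and x0: "0 \<le> x0" "x0 \<le> X" and y: "y \<in> {-X..x0}" "\<tau> y \<le> - X + k - 1"
  shows "card {j\<in>{x0<..X}. \<tau> j \<le> k} \<le> cnt (\<tau> y) \<tau> + nat (\<tau> y + X)"
proof -
  let ?l = "\<tau> y"
  have yX: "y \<in> {-X..X}" using y x0 by auto
  have lX: "?l \<in> {-X..X}" using perms_on_in[OF t yX] .
  have iv: "inv \<tau> ?l = y" by (rule app_inv[OF t])
  let ?L = "{j\<in>{-X..X}. \<tau> j < ?l}"
  have sub: "{j\<in>{x0<..X}. \<tau> j \<le> k} \<subseteq> G ?l \<tau> \<union> ?L"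
  proof
    fix j assume j: "j \<in> {j\<in>{x0<..X}. \<tau> j \<le> k}"
    have jy: "j \<noteq> y" using j y by auto
    hence "\<tau> j \<noteq> ?l" using perms_on_inj[OF t] by (metis injD)
    thus "j \<in> G ?l \<tau> \<union> ?L" using j y x0 iv unfolding G_def by auto
  qed
  have fL: "finite ?L" by (rule finite_subset[of _ "{-X..X}"]) auto
  have cL: "card ?L \<le> nat (?l + X)"
  proof -
    have "inj_on \<tau> ?L" using perms_on_inj[OF t] inj_on_subset by blast
    moreover have "\<tau> ` ?L \<subseteq> {-X..?l - 1}" using perms_on_in[OF t] by fastforce
    moreover have "finite ?L" by (rule finite_subset[of _ "{-X..X}"]) auto
    ultimately have "card ?L \<le> card {-X..?l - 1}" by (intro card_inj_on_le) auto
    thus ?thesis by simp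
  qed
  have "card {j\<in>{x0<..X}. \<tau> j \<le> k} \<le> card (G ?l \<tau> \<union> ?L)"
    by (rule card_mono[OF finite_UnI[OF finite_G fL] sub])
  also have "\<dots> \<le> card (G ?l \<tau>) + card ?L" by (rule card_Un_le)
  finally show ?thesis using cL by (simp add: cnt_def)
qed

end


lemma geo:
  fixes q e :: real and m0 K :: nat
  assumes q0: "0 \<le> q" and q1: "q < 1" and e: "e > 0" and m: "real m0 > real K + 2 * e"
  shows "(\<Sum>i<K. q ^ (m0 - i)) \<le> (if q = 0 then 0 else q powr e) / (1 - q)"
proof (cases "q = 0")
  case True
  have "(\<Sum>i<K. q ^ (m0 - i)) = 0"
  proof (rule sum.neutral, intro ballI)
    fix i assume "i \<in> {..<K}"
    hence "m0 - i > 0" using m e by auto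
    thus "q ^ (m0 - i) = 0" using True by simp
  qed
  thus ?thesis using True by simp
next
  case False
  hence qp: "q > 0" using q0 by simp
  have Km: "K \<le> m0" using m e by linarith
  have "(\<Sum>i<K. q ^ (m0 - i)) = (\<Sum>i<K. q ^ (m0 - K + 1) * q ^ (K - Suc i))"
  proof (rule sum.cong[OF refl])
    fix i assume "i \<in> {..<K}"
    hence h: "m0 - i = (m0 - K + 1) + (K - Suc i)" using Km by auto
    show "q ^ (m0 - i) = q ^ (m0 - K + 1) * q ^ (K - Suc i)" unfolding h by (rule power_add)
  qed
  also have "\<dots> = q ^ (m0 - K + 1) * (\<Sum>i<K. q ^ (K - Suc i))"
    by (simp only: sum_distrib_left)
  also have "(\<Sum>i<K. q ^ (K - Suc i)) = (\<Sum>i<K. q ^ i)"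
    by (rule sum.nat_diff_reindex)
  finally have eqS: "(\<Sum>i<K. q ^ (m0 - i)) = q ^ (m0 - K + 1) * (\<Sum>i<K. q ^ i)" .
  have "(\<Sum>i<K. q ^ i) = (1 - q ^ K) / (1 - q)" using q1 by (simp add: sum_gp_strict)
  also have "\<dots> \<le> 1 / (1 - q)" using q1 qp by (simp add: divide_right_mono)
  finally have g: "(\<Sum>i<K. q ^ i) \<le> 1 / (1 - q)" .
  have s1: "(\<Sum>i<K. q ^ (m0 - i)) \<le> q ^ (m0 - K + 1) * (1 / (1 - q))"
    unfolding eqS by (rule mult_left_mono[OF g]) (use q0 in simp)
  have "q ^ (m0 - K + 1) = q powr real (m0 - K + 1)" by (rule powr_realpow[OF qp, symmetric])
  also have "\<dots> \<le> q powr e"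
  proof (rule powr_mono')
    show "e \<le> real (m0 - K + 1)" using m e Km by (simp add: of_nat_diff)
  qed (use q0 q1 in auto)
  finally have "q ^ (m0 - K + 1) * (1 / (1 - q)) \<le> q powr e * (1 / (1 - q))"
    using q1 by (simp add: divide_right_mono)
  thus ?thesis using s1 False by simp
qed

context ack
begin

lemma fib_E:
  fixes xo a :: int and b e :: real
  assumes q1': "q < 1" and xo: "0 \<le> xo" "0 \<le> a" "xo + a < X"
    and e: "e = b / 4 - a / 2" and epos: "e > 0"
    and EE: "\<And>\<tau>. \<tau> \<in> S \<Longrightarrow> E \<tau> \<Longrightarrow>
        real_of_int (height' (-X) X (cut k \<tau>) xo) > real_of_int xo + b \<and>
        height (-X) X (cut (- X + k - 1) \<tau>) (xo + a) < xo + a"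
  shows "(\<Sum>\<tau>\<in>{\<tau>\<in>Fb r. E \<tau>}. wt q X k \<tau>) \<le>
      ((if q = 0 then 0 else q powr e) / (1 - q)) * (\<Sum>\<tau>\<in>Fb r. wt q X k \<tau>)"
proof -
  let ?c = "(if q = 0 then 0 else q powr e) / (1 - q)"
  have "(if q = 0 then 0 else q powr e) \<ge> 0" by simp
  hence c0: "?c \<ge> 0" using q1' by (intro divide_nonneg_nonneg) auto
  have Z0: "(\<Sum>\<tau>\<in>Fb r. wt q X k \<tau>) \<ge> 0" by (intro sum_nonneg wt_nonneg)
  show ?thesis
  proof (cases "\<exists>\<tau>0\<in>Fb r. E \<tau>0")
    case False
    hence "{\<tau>\<in>Fb r. E \<tau>} = {}" by auto
    hence "(\<Sum>\<tau>\<in>{\<tau>\<in>Fb r. E \<tau>}. wt q X k \<tau>) = 0" by (simp only: sum.empty)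
    thus ?thesis using mult_nonneg_nonneg[OF c0 Z0] by linarith
  next
    case True
    then obtain \<tau>0 where t0: "\<tau>0 \<in> Fb r" "E \<tau>0" by auto
    have t0S: "\<tau>0 \<in> S" and r0: "Rm X k \<tau>0 = r" using t0 by (auto simp: Fb_def)
    define m0 where "m0 = card {j\<in>{xo+a<..X}. \<tau>0 j \<le> k}"
    have m0b: "real m0 > real_of_int k + b / 2 - real_of_int a"
      unfolding m0_def by (rule E1_count[OF t0S xo]) (rule conjunct1[OF EE[OF t0S t0(2)]])
    define K where "K = nat k"
    have m0K: "real m0 > real K + 2 * e" using m0b e k0 by (simp add: K_def)
    have kk: "- X - 1 \<le> k" using k0 X0 by simp
    have same: "{j\<in>{xo+a<..X}. \<tau> j \<le> k} = {j\<in>{xo+a<..X}. \<tau>0 j \<le> k}" if "\<tau> \<in> Fb r" for \<tau>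
    proof -
      have "Rm X k \<tau> = r" using that by (simp add: Fb_def)
      hence "\<And>j. (\<tau> j \<le> k) = (\<tau>0 j \<le> k)" using r0 Rm_part[OF kk] by metis
      thus ?thesis by simp
    qed
    let ?B = "\<lambda>i. {\<tau>\<in>Fb r. cnt (- X + int i) \<tau> \<ge> m0 - i}"
    have ex: "\<exists>i<K. cnt (- X + int i) \<tau> \<ge> m0 - i" if tt: "\<tau> \<in> Fb r" "E \<tau>" for \<tau>
    proof -
      have tS: "\<tau> \<in> S" using tt by (simp add: Fb_def)
      have "height (-X) X (cut (- X + k - 1) \<tau>) (xo + a) < xo + a" by (rule conjunct2[OF EE[OF tS tt(2)]])
      then obtain y where y: "y \<in> {-X..xo+a}" "\<tau> y \<le> - X + k - 1"
        using E2_exists[of "xo + a" \<tau>] xo by auto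
      have yX: "y \<in> {-X..X}" using y xo by auto
      have lX: "\<tau> y \<in> {-X..X}" using perms_on_in[OF tS yX] .
      define i where "i = nat (\<tau> y + X)"
      have li: "\<tau> y = - X + int i" using lX by (simp add: i_def)
      have iK: "i < K" using y lX k0 by (simp add: i_def K_def)
      have "card {j\<in>{xo+a<..X}. \<tau> j \<le> k} \<le> cnt (\<tau> y) \<tau> + nat (\<tau> y + X)"
        by (rule cnt_bound[OF tS _ _ y]) (use xo in auto)
      hence "card {j\<in>{xo+a<..X}. \<tau> j \<le> k} \<le> cnt (\<tau> y) \<tau> + i" by (simp only: i_def[symmetric])
      hence "card {j\<in>{xo+a<..X}. \<tau> j \<le> k} \<le> cnt (- X + int i) \<tau> + i" by (simp only: li)
      hence "m0 \<le> cnt (- X + int i) \<tau> + i" unfolding m0_def same[OF tt(1)] .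
      thus ?thesis using iK by (intro exI[of _ i]) auto
    qed
    have "(\<Sum>\<tau>\<in>{\<tau>\<in>Fb r. E \<tau>}. wt q X k \<tau>) \<le>
        (\<Sum>\<tau>\<in>{\<tau>\<in>Fb r. E \<tau>}. \<Sum>i<K. if cnt (- X + int i) \<tau> \<ge> m0 - i then wt q X k \<tau> else 0)"
    proof (rule sum_mono)
      fix \<tau> assume "\<tau> \<in> {\<tau>\<in>Fb r. E \<tau>}"
      then obtain i where i: "i < K" "cnt (- X + int i) \<tau> \<ge> m0 - i" using ex by blast
      have "wt q X k \<tau> = (if cnt (- X + int i) \<tau> \<ge> m0 - i then wt q X k \<tau> else 0)" using i by simp
      also have "\<dots> \<le> (\<Sum>i<K. if cnt (- X + int i) \<tau> \<ge> m0 - i then wt q X k \<tau> else 0)"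
        by (rule member_le_sum[where f="\<lambda>i. if cnt (- X + int i) \<tau> \<ge> m0 - i then wt q X k \<tau> else 0"])
           (use i wt_nonneg in auto)
      finally show "wt q X k \<tau> \<le> (\<Sum>i<K. if cnt (- X + int i) \<tau> \<ge> m0 - i then wt q X k \<tau> else 0)" .
    qed
    also have "\<dots> = (\<Sum>i<K. \<Sum>\<tau>\<in>{\<tau>\<in>Fb r. E \<tau>}. if cnt (- X + int i) \<tau> \<ge> m0 - i then wt q X k \<tau> else 0)"
      by (rule sum.swap)
    also have "\<dots> \<le> (\<Sum>i<K. \<Sum>\<tau>\<in>?B i. wt q X k \<tau>)"
    proof (rule sum_mono)
      fix i assume "i \<in> {..<K}"
      have fE: "finite {\<tau>\<in>Fb r. E \<tau>}" using finite_Fb by simp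
      have "(\<Sum>\<tau>\<in>{\<tau>\<in>Fb r. E \<tau>}. if cnt (- X + int i) \<tau> \<ge> m0 - i then wt q X k \<tau> else 0) =
            (\<Sum>\<tau>\<in>{\<tau>\<in>{\<tau>\<in>Fb r. E \<tau>}. cnt (- X + int i) \<tau> \<ge> m0 - i}. wt q X k \<tau>)"
        by (rule sum.inter_filter[OF fE, symmetric])
      also have "\<dots> \<le> (\<Sum>\<tau>\<in>?B i. wt q X k \<tau>)"
        by (rule sum_mono2) (use finite_Fb wt_nonneg in auto)
      finally show "(\<Sum>\<tau>\<in>{\<tau>\<in>Fb r. E \<tau>}. if cnt (- X + int i) \<tau> \<ge> m0 - i then wt q X k \<tau> else 0) \<le> (\<Sum>\<tau>\<in>?B i. wt q X k \<tau>)" .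
    qed
    also have "\<dots> \<le> (\<Sum>i<K. q ^ (m0 - i) * (\<Sum>\<tau>\<in>Fb r. wt q X k \<tau>))"
    proof (rule sum_mono)
      fix i assume "i \<in> {..<K}"
      hence "- X + int i \<in> {-X..k}" using k0 X0 by (auto simp: K_def)
      thus "(\<Sum>\<tau>\<in>?B i. wt q X k \<tau>) \<le> q ^ (m0 - i) * (\<Sum>\<tau>\<in>Fb r. wt q X k \<tau>)"
        by (rule tail_bound)
    qed
    also have "\<dots> = (\<Sum>i<K. q ^ (m0 - i)) * (\<Sum>\<tau>\<in>Fb r. wt q X k \<tau>)"
      by (simp add: sum_distrib_right)
    also have "\<dots> \<le> ?c * (\<Sum>\<tau>\<in>Fb r. wt q X k \<tau>)"
      by (rule mult_right_mono[OF geo[OF q0 q1' epos m0K] Z0])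
    finally show ?thesis .
  qed
qed

lemma fib_triv: "(\<Sum>\<tau>\<in>{\<tau>\<in>Fb r. E \<tau>}. wt q X k \<tau>) \<le> 1 * (\<Sum>\<tau>\<in>Fb r. wt q X k \<tau>)"
  using finite_Fb wt_nonneg by (simp add: sum_mono2)

end


lemma powr_ge1: "0 < (q::real) \<Longrightarrow> q \<le> 1 \<Longrightarrow> e \<le> 0 \<Longrightarrow> 1 \<le> q powr e"
proof -
  assume a: "0 < q" "q \<le> 1" "e \<le> 0"
  have "q powr (- e) \<le> 1" by (rule powr_le1) (use a in auto)
  moreover have "q powr (- e) > 0" using a by simp
  ultimately have "1 \<le> inverse (q powr (- e))" by (simp add: one_le_inverse)
  thus ?thesis by (simp add: powr_minus)
qed

theorem lemma3p2:
  fixes q :: real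
  assumes "0 \<le> q" and "q < 1"
  shows "\<exists>C>0. \<forall>(N::nat) (k::nat) (a::nat) (b::real). k \<le> N \<longrightarrow>
     (\<exists>X0::nat. \<forall>X\<ge>X0. \<forall>t::real. t \<ge> 0 \<longrightarrow>
       (let P = asep_prob_dot q (int X) (int k) t
              (\<lambda>\<zeta>. real_of_int (height' (- int X) (int X) (cut (int k) \<zeta>) (int N - int k))
                        > real N - real k + b
                   \<and> height (- int X) (int X) (cut (- int X + int k - 1) \<zeta>) (int N - int k + int a)
                        < int N - int k + int a);
            e = b / 4 - real a / 2
        in (if q = 0 then (e > 0 \<longrightarrow> P \<le> 0) \<and> (e = 0 \<longrightarrow> P \<le> C)
            else P \<le> C * q powr e)))"
proof -
  define C where "C = 1 / (1 - q)"
  have Cpos: "C > 0" using assms by (simp add: C_def)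
  have C1: "C \<ge> 1" using assms by (simp add: C_def)
  show ?thesis
  proof (intro exI[of _ C] conjI allI impI)
    show "C > 0" by (rule Cpos)
    fix N k a :: nat and b :: real assume kN: "k \<le> N"
    show "\<exists>X0::nat. \<forall>X\<ge>X0. \<forall>t::real. t \<ge> 0 \<longrightarrow>
       (let P = asep_prob_dot q (int X) (int k) t
              (\<lambda>\<zeta>. real_of_int (height' (- int X) (int X) (cut (int k) \<zeta>) (int N - int k))
                        > real N - real k + b
                   \<and> height (- int X) (int X) (cut (- int X + int k - 1) \<zeta>) (int N - int k + int a)
                        < int N - int k + int a);
            e = b / 4 - real a / 2
        in (if q = 0 then (e > 0 \<longrightarrow> P \<le> 0) \<and> (e = 0 \<longrightarrow> P \<le> C)
            else P \<le> C * q powr e))"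
    proof (intro exI[of _ "N + a + 1"] allI impI)
      fix X :: nat and t :: real assume X: "N + a + 1 \<le> X" and t: "t \<ge> 0"
      interpret ack q "int X" "int k" by unfold_locales (use assms kN X in auto)
      define E where "E = (\<lambda>\<zeta>. real_of_int (height' (- int X) (int X) (cut (int k) \<zeta>) (int N - int k))
                        > real N - real k + b
                   \<and> height (- int X) (int X) (cut (- int X + int k - 1) \<zeta>) (int N - int k + int a)
                        < int N - int k + int a)"
      define e where "e = b / 4 - real a / 2"
      define P where "P = asep_prob_dot q (int X) (int k) t E"
      have P1: "P \<le> 1" unfolding P_def
        by (rule main_ineq[OF t, of 1]) (use fib_triv in auto)
      have P2: "P \<le> (if q = 0 then 0 else q powr e) / (1 - q)" if ep: "e > 0"
        unfolding P_def
      proof (rule main_ineq[OF t])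
        show "0 \<le> (if q = 0 then 0 else q powr e) / (1 - q)" using assms by auto
        fix r
        show "(\<Sum>\<tau>\<in>{\<tau> \<in> Fb r. E \<tau>}. wt q (int X) (int k) \<tau>)
              \<le> (if q = 0 then 0 else q powr e) / (1 - q) * (\<Sum>\<tau>\<in>Fb r. wt q (int X) (int k) \<tau>)"
        proof (rule fib_E[where xo="int N - int k" and a="int a" and b=b])
          show "q < 1" by (rule assms(2))
          show "0 \<le> int N - int k" "0 \<le> int a" "int N - int k + int a < int X" using kN X by auto
          show "e = b / 4 - real_of_int (int a) / 2" by (simp add: e_def)
          show "e > 0" by (rule ep)
          fix \<tau> assume "\<tau> \<in> S" "E \<tau>"
          thus "real_of_int (int N - int k) + b < real_of_int (height' (- int X) (int X) (cut (int k) \<tau>) (int N - int k)) \<and>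
              height (- int X) (int X) (cut (- int X + int k - 1) \<tau>) (int N - int k + int a) < int N - int k + int a"
            using kN by (simp add: E_def)
        qed
      qed
      have goal: "if q = 0 then (e > 0 \<longrightarrow> P \<le> 0) \<and> (e = 0 \<longrightarrow> P \<le> C) else P \<le> C * q powr e"
      proof (cases "q = 0")
        case True
        have "e > 0 \<longrightarrow> P \<le> 0" using P2 True by simp
        moreover have "e = 0 \<longrightarrow> P \<le> C" using P1 True by (simp add: C_def)
        ultimately show ?thesis using True by simp
      next
        case False
        hence qp: "q > 0" using assms by simp
        have "P \<le> C * q powr e"
        proof (cases "e > 0")
          case True thus ?thesis using P2 False by (simp add: C_def)
        next
          case False
          have "1 \<le> q powr e" by (rule powr_ge1) (use qp assms False in auto)
          hence "1 * 1 \<le> C * q powr e" using C1 by (intro mult_mono) auto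
          thus ?thesis using P1 by simp
        qed
        thus ?thesis using False by simp
      qed
      show "let P = asep_prob_dot q (int X) (int k) t
              (\<lambda>\<zeta>. real_of_int (height' (- int X) (int X) (cut (int k) \<zeta>) (int N - int k))
                        > real N - real k + b
                   \<and> height (- int X) (int X) (cut (- int X + int k - 1) \<zeta>) (int N - int k + int a)
                        < int N - int k + int a);
            e = b / 4 - real a / 2
        in (if q = 0 then (e > 0 \<longrightarrow> P \<le> 0) \<and> (e = 0 \<longrightarrow> P \<le> C)
            else P \<le> C * q powr e)"
        using goal unfolding Let_def P_def E_def e_def .
    qed
  qed
qed


end
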